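(* Let $b>1$, $R_{1b}=\{z\in\mathbb{C}: 1\le|z|\le b\}$, and let $f$ be an orientation preserving $C^1$-smooth homeomorphism defined in a neighborhood of $R_{1b}$ with Jacobian $J_f>0$ on $R_{1b}$. For $\theta\in[0,2\pi)$ let $\gamma_\theta$ be the radial segment $\{re^{i\theta}:1\le r\le b\}$, let $\Gamma_0=\{\gamma_\theta:\theta\in[0,2\pi)\}$ and $\Gamma_0'=f(\Gamma_0)=\{f(\gamma_\theta)\}$. Then \[ M_2(\Gamma_0')=\int_0^{2\pi}\left(\int_1^b\frac{D_{f,\theta}(re^{i\theta})}{r}\,dr\right)^{-1}d\theta, \] and the function \[ \rho_0=\left(\frac{D_{f,\theta}/r}{|f_r|\int_1^b \frac{D_{f,\theta}}{r}\,dr}\right)\circ f^{-1} \] (where the quantity in parentheses is evaluated at $z=re^{i\theta}$) is the extremal function for $M_2(\Gamma_0')$, i.e. it is admissible for $\Gamma_0'$ and $M_2(\Gamma_0')=\int\rho_0^2\,dm$.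
   Context: $M_2$ denotes the 2-module of a curve family in the plane: the infimum of $\int\rho^2\,dm$ ($m$ = Lebesgue measure) over non-negative Borel $\rho$ with $\int_\gamma\rho\,ds\ge1$ for all curves $\gamma$ of the family. For $z=re^{i\theta}$, $f_r=\frac{\partial}{\partial r}f(re^{i\theta})$, the complex dilatation is $\mu_f=f_{\bar z}/f_z$, $J_f=|f_z|^2-|f_{\bar z}|^2$, and the directional dilatation of $f$ in direction $\alpha\in\mathbb{R}$ is $D_{f,\alpha}=\frac{|1+e^{-2i\alpha}\mu_f|^2}{1-|\mu_f|^2}$; in particular $D_{f,\theta}(re^{i\theta})=|f_r|^2/J_f$. *)

theory Defs
  imports "HOL-Analysis.Analysis"
begin

definition dx :: "(complex \<Rightarrow> complex) \<Rightarrow> complex \<Rightarrow> complex" where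
  "dx f z = frechet_derivative f (at z) 1"

definition dy :: "(complex \<Rightarrow> complex) \<Rightarrow> complex \<Rightarrow> complex" where
  "dy f z = frechet_derivative f (at z) \<i>"

definition dz :: "(complex \<Rightarrow> complex) \<Rightarrow> complex \<Rightarrow> complex" where
  "dz f z = (dx f z - \<i> * dy f z) / 2"

definition dzbar :: "(complex \<Rightarrow> complex) \<Rightarrow> complex \<Rightarrow> complex" where
  "dzbar f z = (dx f z + \<i> * dy f z) / 2"

definition jac :: "(complex \<Rightarrow> complex) \<Rightarrow> complex \<Rightarrow> real" where
  "jac f z = (cmod (dz f z))\<^sup>2 - (cmod (dzbar f z))\<^sup>2"

definition cdil :: "(complex \<Rightarrow> complex) \<Rightarrow> complex \<Rightarrow> complex" where
  "cdil f z = dzbar f z / dz f z"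

definition dir_dil :: "(complex \<Rightarrow> complex) \<Rightarrow> real \<Rightarrow> complex \<Rightarrow> real" where
  "dir_dil f \<alpha> z = (cmod (1 + exp (- 2 * \<i> * complex_of_real \<alpha>) * cdil f z))\<^sup>2
                      / (1 - (cmod (cdil f z))\<^sup>2)"

definition rad_deriv :: "(complex \<Rightarrow> complex) \<Rightarrow> complex \<Rightarrow> complex" where
  "rad_deriv f z = frechet_derivative f (at z) (z / complex_of_real (cmod z))"

text \<open>A curve is given as a triple (g, a, c): a C^1 parametrisation g on [a,c].
  Arc-length integral of a Borel rho >= 0 along it: \<integral>_a^c rho(g t) |g'(t)| dt.\<close>
definition ds_integral :: "(complex \<Rightarrow> ennreal) \<Rightarrow> (real \<Rightarrow> complex) \<Rightarrow> real \<Rightarrow> real \<Rightarrow> ennreal" where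
  "ds_integral \<rho> g a c =
     (\<integral>\<^sup>+ t. indicator {a..c} t * \<rho> (g t) *
          ennreal (norm (vector_derivative g (at t within {a..c}))) \<partial>lborel)"

definition admissible2 :: "((real \<Rightarrow> complex) \<times> real \<times> real) set \<Rightarrow> (complex \<Rightarrow> ennreal) \<Rightarrow> bool" where
  "admissible2 \<Gamma> \<rho> \<longleftrightarrow> \<rho> \<in> borel_measurable borel \<and>
      (\<forall>(g, a, c) \<in> \<Gamma>. ds_integral \<rho> g a c \<ge> 1)"

definition modulus2 :: "((real \<Rightarrow> complex) \<times> real \<times> real) set \<Rightarrow> ennreal" where
  "modulus2 \<Gamma> = (INF \<rho> \<in> {\<rho>. admissible2 \<Gamma> \<rho>}. \<integral>\<^sup>+ z. (\<rho> z)\<^sup>2 \<partial>lborel)"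

definition annulus :: "real \<Rightarrow> complex set" where
  "annulus b = {z. 1 \<le> cmod z \<and> cmod z \<le> b}"

definition radial_image_family :: "(complex \<Rightarrow> complex) \<Rightarrow> real \<Rightarrow> ((real \<Rightarrow> complex) \<times> real \<times> real) set" where
  "radial_image_family f b =
     {((\<lambda>r. f (complex_of_real r * exp (\<i> * complex_of_real \<theta>))), 1, b) | \<theta>. 0 \<le> \<theta> \<and> \<theta> < 2 * pi}"

definition radial_dil_integral :: "(complex \<Rightarrow> complex) \<Rightarrow> real \<Rightarrow> real \<Rightarrow> real" where
  "radial_dil_integral f b \<theta> =
     integral {1..b} (\<lambda>r. dir_dil f \<theta> (complex_of_real r * exp (\<i> * complex_of_real \<theta>)) / r)"

text \<open>The candidate extremal density rho_0, with g = f^{-1}; extended by 0 off f(R_{1b}).\<close>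
definition rho0 :: "(complex \<Rightarrow> complex) \<Rightarrow> (complex \<Rightarrow> complex) \<Rightarrow> real \<Rightarrow> complex \<Rightarrow> ennreal" where
  "rho0 f g b w =
     (if w \<in> f ` annulus b then
        (let z = g w; r = cmod z; \<theta> = Arg z in
          ennreal ((dir_dil f \<theta> z / r) / (cmod (rad_deriv f z) * radial_dil_integral f b \<theta>)))
      else 0)"

end

theory Submission
  imports Defs
begin

lemma Basis2: "(Basis::(real^2) set) = {axis 1 1, axis 2 1}"
  by (auto simp: Basis_vec_def UNIV_2)
lemma prod_Basis2: "(\<Prod>b\<in>(Basis::(real^2) set). f b) = f (axis 1 1) * f (axis 2 1)"
  by (simp add: Basis2 axis_eq_axis)

definition vp :: "real \<times> real \<Rightarrow> real^2" where
  "vp p = (\<chi> i. if i = 1 then fst p else snd p)"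
definition pv :: "real^2 \<Rightarrow> real \<times> real" where
  "pv x = (x$1, x$2)"
definition cv :: "real^2 \<Rightarrow> complex" where
  "cv x = Complex (x$1) (x$2)"
definition vc :: "complex \<Rightarrow> real^2" where
  "vc z = (\<chi> i. if i = 1 then Re z else Im z)"

lemma vp_nth[simp]: "vp p $ 1 = fst p" "vp p $ 2 = snd p"
  by (simp_all add: vp_def)
lemma vc_nth[simp]: "vc z $ 1 = Re z" "vc z $ 2 = Im z"
  by (simp_all add: vc_def)
lemma pv_vp[simp]: "pv (vp p) = p" by (simp add: pv_def)
lemma vp_pv[simp]: "vp (pv x) = x" by (simp add: pv_def vec_eq_iff forall_2)
lemma cv_vc[simp]: "cv (vc z) = z" by (simp add: cv_def complex_eq_iff)
lemma vc_cv[simp]: "vc (cv x) = x" by (simp add: cv_def vec_eq_iff forall_2)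

lemma linear_vp: "linear vp" by (rule linearI) (auto simp: vp_def vec_eq_iff)
lemma linear_pv: "linear pv" by (rule linearI) (auto simp: pv_def)
lemma linear_cv: "linear cv" by (rule linearI) (simp_all add: cv_def complex_eq_iff)
lemma linear_vc: "linear vc" by (rule linearI) (auto simp: vc_def vec_eq_iff)

lemma bl_vp: "bounded_linear vp" using linear_vp by (simp add: linear_conv_bounded_linear)
lemma bl_pv: "bounded_linear pv" using linear_pv by (simp add: linear_conv_bounded_linear)
lemma bl_cv: "bounded_linear cv" using linear_cv by (simp add: linear_conv_bounded_linear)
lemma bl_vc: "bounded_linear vc" using linear_vc by (simp add: linear_conv_bounded_linear)

lemma meas_vp[measurable]: "vp \<in> borel_measurable borel"
  by (intro borel_measurable_continuous_onI linear_continuous_on bl_vp)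
lemma meas_pv[measurable]: "pv \<in> borel_measurable borel"
  by (intro borel_measurable_continuous_onI linear_continuous_on bl_pv)
lemma meas_cv[measurable]: "cv \<in> borel_measurable borel"
  by (intro borel_measurable_continuous_onI linear_continuous_on bl_cv)
lemma meas_vc[measurable]: "vc \<in> borel_measurable borel"
  by (intro borel_measurable_continuous_onI linear_continuous_on bl_vc)

lemma lborel_vec2: "(lborel :: (real^2) measure) = distr lborel borel vp"
proof (rule lborel_eqI)
  fix l u :: "real^2" assume le: "\<And>b. b \<in> Basis \<Longrightarrow> l \<bullet> b \<le> u \<bullet> b"
  have le1: "l$1 \<le> u$1" and le2: "l$2 \<le> u$2" using le[of "axis 1 1"] le[of "axis 2 1"]
    by (auto simp: Basis2 inner_axis)
  have "vp -` box l u = box (l$1, l$2) (u$1, u$2)"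
    by (auto simp: mem_box_cart mem_box Basis_prod_def forall_2)
  then have "emeasure (distr lborel borel vp) (box l u) = emeasure lborel (box (l$1, l$2) (u$1, u$2))"
    by (simp add: emeasure_distr)
  also have "\<dots> = (u$1 - l$1) * (u$2 - l$2)"
    using le1 le2 by (subst emeasure_lborel_box) (auto simp: Basis_prod_def ennreal_mult mult.commute)
  also have "\<dots> = (\<Prod>b\<in>Basis. (u - l) \<bullet> b)" by (simp add: prod_Basis2 inner_axis)
  finally show "emeasure (distr lborel borel vp) (box l u) = (\<Prod>b\<in>Basis. (u - l) \<bullet> b)" .
qed simp

lemma lborel_complex: "(lborel :: complex measure) = distr lborel borel cv"
proof (rule lborel_eqI)
  fix l u :: complex assume le: "\<And>b. b \<in> Basis \<Longrightarrow> l \<bullet> b \<le> u \<bullet> b"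
  have le1: "Re l \<le> Re u" and le2: "Im l \<le> Im u" using le[of 1] le[of "\<i>"]
    by (auto simp: Basis_complex_def)
  have "cv -` box l u = box (vc l) (vc u)"
    by (auto simp: mem_box_cart mem_box Basis_complex_def forall_2 cv_def)
  then have "emeasure (distr lborel borel cv) (box l u) = emeasure lborel (box (vc l) (vc u))"
    by (simp add: emeasure_distr)
  also have "\<dots> = (Re u - Re l) * (Im u - Im l)"
    using le1 le2 by (subst emeasure_lborel_box) (auto simp: Basis2 inner_axis ennreal_mult axis_eq_axis)
  also have "\<dots> = (\<Prod>b\<in>Basis. (u - l) \<bullet> b)" by (simp add: Basis_complex_def)
  finally show "emeasure (distr lborel borel cv) (box l u) = (\<Prod>b\<in>Basis. (u - l) \<bullet> b)" .
qed simp

lemma cov_vec: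
  fixes \<Psi> :: "real^2 \<Rightarrow> real^2" and \<Psi>' :: "real^2 \<Rightarrow> real^2 \<Rightarrow> real^2" and h :: "real^2 \<Rightarrow> ennreal"
  assumes S: "S \<in> sets borel" and SB: "\<Psi> ` S \<in> sets borel"
    and der: "\<And>x. x \<in> S \<Longrightarrow> (\<Psi> has_derivative \<Psi>' x) (at x within S)"
    and inj: "inj_on \<Psi> S" and bnd: "bounded S"
    and M: "\<And>x. x \<in> S \<Longrightarrow> \<bar>det (matrix (\<Psi>' x))\<bar> \<le> M"
    and dm: "(\<lambda>x. indicator S x * \<bar>det (matrix (\<Psi>' x))\<bar>) \<in> borel_measurable borel"
    and h: "h \<in> borel_measurable borel"
  shows "(\<integral>\<^sup>+y. indicator (\<Psi>`S) y * h y \<partial>lborel)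
       = (\<integral>\<^sup>+x. indicator S x * ennreal \<bar>det (matrix (\<Psi>' x))\<bar> * h (\<Psi> x) \<partial>lborel)"
proof -
  define D where "D x = indicator S x * \<bar>det (matrix (\<Psi>' x))\<bar>" for x
  define \<Psi>0 where "\<Psi>0 x = indicator S x *\<^sub>R \<Psi> x" for x
  have cont: "continuous_on S \<Psi>" using der by (rule has_derivative_continuous_on)
  have [measurable]: "\<Psi>0 \<in> borel_measurable borel"
    unfolding \<Psi>0_def using S cont by (rule borel_measurable_continuous_on_indicator)
  have Dm[measurable]: "D \<in> borel_measurable borel" using dm unfolding D_def .
  have D0: "D x \<ge> 0" for x by (simp add: D_def)
  have step1: "emeasure lborel (\<Psi>`S \<inter> B) = (\<integral>\<^sup>+x. ennreal (D x) * indicator (\<Psi>0 -` B) x \<partial>lborel)"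
    if B: "B \<in> sets borel" for B
  proof -
    define T where "T = S \<inter> \<Psi>0 -` B"
    have PB: "\<Psi>0 -` B \<in> sets borel"
    proof -
      have "\<Psi>0 -` B \<inter> space borel \<in> sets borel" using B by measurable
      then show ?thesis by simp
    qed
    have TB: "T \<in> sets borel" using S PB by (auto simp: T_def)
    have T2: "T = S \<inter> \<Psi> -` B" by (auto simp: T_def \<Psi>0_def)
    have img: "\<Psi>`T = \<Psi>`S \<inter> B" by (auto simp: T2)
    have Tbnd: "bounded T" using bnd by (auto simp: T_def intro: bounded_subset)
    have eqi: "(\<lambda>x. ennreal (D x) * indicator (\<Psi>0 -` B) x) = (\<lambda>x. ennreal (indicator T x * \<bar>det (matrix (\<Psi>' x))\<bar>))"
      by (auto simp: D_def T_def fun_eq_iff split: split_indicator)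
    have fin: "(\<integral>\<^sup>+x. ennreal (indicator T x * \<bar>det (matrix (\<Psi>' x))\<bar>) \<partial>lborel) < \<infinity>"
    proof -
      have "(\<integral>\<^sup>+x. ennreal (indicator T x * \<bar>det (matrix (\<Psi>' x))\<bar>) \<partial>lborel)
          \<le> (\<integral>\<^sup>+x. ennreal M * indicator T x \<partial>lborel)"
        by (intro nn_integral_mono) (auto simp: T_def M split: split_indicator intro: ennreal_leI)
      also have "\<dots> = ennreal M * emeasure lborel T" using TB by (simp add: nn_integral_cmult_indicator)
      also have "\<dots> < \<infinity>" using emeasure_bounded_finite[OF Tbnd]
        by (simp add: ennreal_mult_less_top)
      finally show ?thesis .
    qed
    define r where "r = enn2real (\<integral>\<^sup>+x. ennreal (indicator T x * \<bar>det (matrix (\<Psi>' x))\<bar>) \<partial>lborel)"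
    have r: "(\<integral>\<^sup>+x. ennreal (indicator T x * \<bar>det (matrix (\<Psi>' x))\<bar>) \<partial>lborel) = ennreal r" "r \<ge> 0"
      using fin by (auto simp: r_def less_top)
    have Tm: "(\<lambda>x. indicator T x * \<bar>det (matrix (\<Psi>' x))\<bar>) \<in> borel_measurable borel"
    proof -
      have "(\<lambda>x. indicator T x * \<bar>det (matrix (\<Psi>' x))\<bar>) = (\<lambda>x. indicator (\<Psi>0 -` B) x * D x)"
        by (auto simp: D_def T_def fun_eq_iff split: split_indicator)
      also have "\<dots> \<in> borel_measurable borel"
        using PB by measurable
      finally show ?thesis .
    qed
    have "((\<lambda>x. indicator T x * \<bar>det (matrix (\<Psi>' x))\<bar>) has_integral r) UNIV"
      by (rule nn_integral_has_integral[OF Tm _ r(1) r(2)]) simp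
    then have hi: "((\<lambda>x. \<bar>det (matrix (\<Psi>' x))\<bar>) has_integral r) T"
    proof -
      assume a: "((\<lambda>x. indicator T x * \<bar>det (matrix (\<Psi>' x))\<bar>) has_integral r) UNIV"
      have "(\<lambda>x. indicator T x * \<bar>det (matrix (\<Psi>' x))\<bar>) = (\<lambda>x. if x \<in> T then \<bar>det (matrix (\<Psi>' x))\<bar> else 0)"
        by (auto simp: fun_eq_iff)
      with a show ?thesis by (simp add: has_integral_restrict_UNIV)
    qed
    have derT: "\<And>x. x \<in> T \<Longrightarrow> (\<Psi> has_derivative \<Psi>' x) (at x within T)"
      using der by (auto simp: T_def intro: has_derivative_subset)
    have injT: "inj_on \<Psi> T" using inj by (auto simp: T_def intro: inj_on_subset)
    have TL: "T \<in> sets lebesgue" using TB by simp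
    from has_measure_differentiable_image[OF TL derT injT, of r] hi
    have lm: "\<Psi>`T \<in> lmeasurable" "measure lebesgue (\<Psi>`T) = r" by auto
    have imB: "\<Psi>`T \<in> sets borel" using SB B by (simp add: img)
    have "emeasure lborel (\<Psi>`S \<inter> B) = emeasure lebesgue (\<Psi>`T)"
      using imB by (simp add: img)
    also have "\<dots> = ennreal r" using lm by (simp add: emeasure_eq_measure2)
    also have "\<dots> = (\<integral>\<^sup>+x. ennreal (D x) * indicator (\<Psi>0 -` B) x \<partial>lborel)"
      using r(1) by (simp add: eqi)
    finally show ?thesis .
  qed
  have meq: "density lborel (indicator (\<Psi>`S)) = distr (density lborel (\<lambda>x. ennreal (D x))) borel \<Psi>0"
  proof (rule measure_eqI)
    fix B assume "B \<in> sets (density lborel (indicator (\<Psi>`S)))"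
    then have B: "B \<in> sets borel" by simp
    have "emeasure (density lborel (indicator (\<Psi>`S))) B = (\<integral>\<^sup>+x. indicator (\<Psi>`S) x * indicator B x \<partial>lborel)"
      using B SB by (simp add: emeasure_density)
    also have "\<dots> = emeasure lborel (\<Psi>`S \<inter> B)"
      using B SB by (simp add: indicator_inter_arith[symmetric] nn_integral_indicator del: nn_integral_indicator_finite)
    also have "\<dots> = (\<integral>\<^sup>+x. ennreal (D x) * indicator (\<Psi>0 -` B) x \<partial>lborel)" using step1[OF B] .
    also have "\<dots> = emeasure (distr (density lborel (\<lambda>x. ennreal (D x))) borel \<Psi>0) B"
    proof -
      have "\<Psi>0 -` B \<inter> space borel \<in> sets borel" using B by measurable
      then have PB: "\<Psi>0 -` B \<in> sets borel" by simp
      then show ?thesis using B by (simp add: emeasure_distr emeasure_density mult.commute)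
    qed
    finally show "emeasure (density lborel (indicator (\<Psi>`S))) B = emeasure (distr (density lborel (\<lambda>x. ennreal (D x))) borel \<Psi>0) B" .
  qed simp
  have "(\<integral>\<^sup>+y. indicator (\<Psi>`S) y * h y \<partial>lborel) = (\<integral>\<^sup>+y. h y \<partial>density lborel (indicator (\<Psi>`S)))"
    using SB h by (simp add: nn_integral_density)
  also have "\<dots> = (\<integral>\<^sup>+y. h y \<partial>distr (density lborel (\<lambda>x. ennreal (D x))) borel \<Psi>0)" by (simp add: meq)
  also have "\<dots> = (\<integral>\<^sup>+x. h (\<Psi>0 x) \<partial>density lborel (\<lambda>x. ennreal (D x)))"
    using h by (simp add: nn_integral_distr)
  also have "\<dots> = (\<integral>\<^sup>+x. ennreal (D x) * h (\<Psi>0 x) \<partial>lborel)"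
    using h by (simp add: nn_integral_density)
  also have "\<dots> = (\<integral>\<^sup>+x. indicator S x * ennreal \<bar>det (matrix (\<Psi>' x))\<bar> * h (\<Psi> x) \<partial>lborel)"
    by (intro nn_integral_cong) (auto simp: D_def \<Psi>0_def split: split_indicator)
  finally show ?thesis .
qed

definition jdet :: "(real \<times> real \<Rightarrow> complex) \<Rightarrow> real" where
  "jdet L = Re (L (1,0)) * Im (L (0,1)) - Im (L (1,0)) * Re (L (0,1))"

lemma cov_pair:
  fixes \<Phi> :: "real \<times> real \<Rightarrow> complex" and \<Phi>' :: "real \<times> real \<Rightarrow> real \<times> real \<Rightarrow> complex"
    and h :: "complex \<Rightarrow> ennreal"
  assumes S: "S \<in> sets borel" and SB: "\<Phi> ` S \<in> sets borel"
    and der: "\<And>p. p \<in> S \<Longrightarrow> (\<Phi> has_derivative \<Phi>' p) (at p within S)"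
    and inj: "inj_on \<Phi> S" and bnd: "bounded S"
    and M: "\<And>p. p \<in> S \<Longrightarrow> \<bar>jdet (\<Phi>' p)\<bar> \<le> M"
    and dm: "(\<lambda>p. indicator S p * \<bar>jdet (\<Phi>' p)\<bar>) \<in> borel_measurable borel"
    and h[measurable]: "h \<in> borel_measurable borel"
  shows "(\<integral>\<^sup>+z. indicator (\<Phi>`S) z * h z \<partial>lborel)
       = (\<integral>\<^sup>+p. indicator S p * ennreal \<bar>jdet (\<Phi>' p)\<bar> * h (\<Phi> p) \<partial>lborel)"
proof -
  define \<Psi> where "\<Psi> = vc \<circ> \<Phi> \<circ> pv"
  define \<Psi>' where "\<Psi>' x = vc \<circ> \<Phi>' (pv x) \<circ> pv" for x
  define S' where "S' = pv -` S"
  define \<Phi>0 where "\<Phi>0 p = indicator S p *\<^sub>R \<Phi> p" for p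
  have cont: "continuous_on S \<Phi>" using der by (rule has_derivative_continuous_on)
  have [measurable]: "\<Phi>0 \<in> borel_measurable borel"
    unfolding \<Phi>0_def using S cont by (rule borel_measurable_continuous_on_indicator)
  have [measurable]: "S \<in> sets borel" using S .
  have dm'[measurable]: "(\<lambda>p. ennreal (indicator S p * \<bar>jdet (\<Phi>' p)\<bar>)) \<in> borel_measurable borel"
    using dm by measurable
  have S'B: "S' \<in> sets borel"
  proof -
    have "pv -` S \<inter> space borel \<in> sets borel" by measurable
    then show ?thesis by (simp add: S'_def)
  qed
  have S'im: "S' = vp ` S"
  proof
    show "S' \<subseteq> vp ` S" using vp_pv by (force simp: S'_def)
  qed (auto simp: S'_def)
  have PsiS': "\<Psi> ` S' = cv -` (\<Phi> ` S)"
  proof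
    show "\<Psi> ` S' \<subseteq> cv -` (\<Phi> ` S)" by (auto simp: \<Psi>_def S'_def)
    show "cv -` (\<Phi> ` S) \<subseteq> \<Psi> ` S'"
    proof
      fix x assume "x \<in> cv -` (\<Phi> ` S)"
      then obtain p where p: "p \<in> S" "cv x = \<Phi> p" by auto
      then have "x = \<Psi> (vp p)" by (metis \<Psi>_def comp_apply pv_vp vc_cv)
      moreover have "vp p \<in> S'" using p by (simp add: S'_def)
      ultimately show "x \<in> \<Psi> ` S'" by blast
    qed
  qed
  have PsiSB: "\<Psi> ` S' \<in> sets borel"
  proof -
    have "cv -` (\<Phi> ` S) \<inter> space borel \<in> sets borel" using SB by measurable
    then show ?thesis by (simp add: PsiS')
  qed
  have derP: "(\<Psi> has_derivative \<Psi>' x) (at x within S')" if x: "x \<in> S'" for x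
  proof -
    have "(pv has_derivative pv) (at x within S')" by (rule bounded_linear_imp_has_derivative[OF bl_pv])
    moreover have "(\<Phi> has_derivative \<Phi>' (pv x)) (at (pv x) within pv ` S')"
    proof -
      have "pv ` S' = S" by (auto simp: S'_def image_iff intro!: exI[of _ "vp x" for x])
      then show ?thesis using der x by (simp add: S'_def)
    qed
    ultimately have "((\<Phi> \<circ> pv) has_derivative (\<Phi>' (pv x) \<circ> pv)) (at x within S')"
      by (rule diff_chain_within)
    then have "((\<lambda>y. vc ((\<Phi> \<circ> pv) y)) has_derivative (\<lambda>y. vc ((\<Phi>' (pv x) \<circ> pv) y))) (at x within S')"
      by (rule bounded_linear.has_derivative[OF bl_vc])
    then show ?thesis by (simp add: \<Psi>_def \<Psi>'_def comp_def)
  qed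
  have injP: "inj_on \<Psi> S'"
  proof (rule inj_onI)
    fix x y assume "x \<in> S'" "y \<in> S'" "\<Psi> x = \<Psi> y"
    then have "\<Phi> (pv x) = \<Phi> (pv y)" "pv x \<in> S" "pv y \<in> S" by (auto simp: \<Psi>_def S'_def dest: arg_cong[of _ _ cv])
    then have "pv x = pv y" using inj by (auto dest: inj_onD)
    then show "x = y" by (metis vp_pv)
  qed
  have bndP: "bounded S'" unfolding S'im by (rule bounded_linear_image[OF bnd bl_vp])
  have detP: "det (matrix (\<Psi>' x)) = jdet (\<Phi>' (pv x))" for x
  proof -
    have a1: "pv (axis 1 1) = (1,0)" and a2: "pv (axis 2 1) = (0,1)"
      by (simp_all add: pv_def axis_def)
    show ?thesis by (simp add: det_2 matrix_def \<Psi>'_def a1 a2 jdet_def)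
  qed
  have MP: "\<bar>det (matrix (\<Psi>' x))\<bar> \<le> M" if "x \<in> S'" for x
    using M that by (simp add: detP S'_def)
  have dmP: "(\<lambda>x. indicator S' x * \<bar>det (matrix (\<Psi>' x))\<bar>) \<in> borel_measurable borel"
  proof -
    have "(\<lambda>x. indicator S' x * \<bar>det (matrix (\<Psi>' x))\<bar>) = (\<lambda>x. indicator S (pv x) * \<bar>jdet (\<Phi>' (pv x))\<bar>)"
      by (auto simp: detP S'_def fun_eq_iff split: split_indicator)
    also have "\<dots> \<in> borel_measurable borel" using dm by measurable
    finally show ?thesis .
  qed
  have hc[measurable]: "(\<lambda>x. h (cv x)) \<in> borel_measurable borel" by measurable
  define G where "G p = ennreal (indicator S p * \<bar>jdet (\<Phi>' p)\<bar>) * h (\<Phi>0 p)" for p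
  have Gm[measurable]: "G \<in> borel_measurable borel" unfolding G_def by measurable
  have "(\<integral>\<^sup>+z. indicator (\<Phi>`S) z * h z \<partial>lborel)
      = (\<integral>\<^sup>+z. indicator (\<Phi>`S) z * h z \<partial>distr lborel borel cv)"
    by (simp add: lborel_complex[symmetric])
  also have "\<dots> = (\<integral>\<^sup>+x. indicator (\<Phi>`S) (cv x) * h (cv x) \<partial>lborel)"
    using SB by (subst nn_integral_distr) auto
  also have "\<dots> = (\<integral>\<^sup>+x. indicator (\<Psi>`S') x * h (cv x) \<partial>lborel)"
    by (simp add: PsiS' indicator_def)
  also have "\<dots> = (\<integral>\<^sup>+x. indicator S' x * ennreal \<bar>det (matrix (\<Psi>' x))\<bar> * h (cv (\<Psi> x)) \<partial>lborel)"
    by (rule cov_vec[OF S'B PsiSB derP injP bndP MP dmP hc])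
  also have "\<dots> = (\<integral>\<^sup>+x. G (pv x) \<partial>lborel)"
    by (intro nn_integral_cong) (auto simp: G_def S'_def detP \<Psi>_def \<Phi>0_def split: split_indicator)
  also have "\<dots> = (\<integral>\<^sup>+x. G x \<partial>distr lborel borel pv)"
    by (subst nn_integral_distr) auto
  also have "distr lborel borel pv = (lborel :: (real\<times>real) measure)"
  proof -
    have "distr lborel borel pv = distr (distr lborel borel vp) borel pv" by (simp add: lborel_vec2[symmetric])
    also have "\<dots> = distr lborel borel (pv \<circ> vp)" by (simp add: distr_distr)
    also have "\<dots> = distr lborel borel (\<lambda>x. x)" by (simp add: comp_def)
    also have "\<dots> = lborel" by (simp add: distr_id2)
    finally show ?thesis .
  qed
  also have "(\<integral>\<^sup>+x. G x \<partial>lborel) = (\<integral>\<^sup>+p. indicator S p * ennreal \<bar>jdet (\<Phi>' p)\<bar> * h (\<Phi> p) \<partial>lborel)"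
    by (intro nn_integral_cong) (auto simp: G_def \<Phi>0_def split: split_indicator)
  finally show ?thesis .
qed


lemma deriv_decomp:
  assumes "f differentiable (at z)"
  shows "frechet_derivative f (at z) w = of_real (Re w) * dx f z + of_real (Im w) * dy f z"
proof -
  have "(f has_derivative frechet_derivative f (at z)) (at z)"
    using assms by (simp add: frechet_derivative_works)
  then have lin: "linear (frechet_derivative f (at z))"
    by (simp add: has_derivative_linear)
  have w: "w = Re w *\<^sub>R 1 + Im w *\<^sub>R \<i>" by (simp add: complex_eq_iff)
  have "frechet_derivative f (at z) w = Re w *\<^sub>R frechet_derivative f (at z) 1 + Im w *\<^sub>R frechet_derivative f (at z) \<i>"
    by (subst w) (simp add: linear_add[OF lin] linear_scale[OF lin])
  then show ?thesis by (simp add: dx_def dy_def scaleR_conv_of_real)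
qed

lemma jac_formula: "jac f z = Re (dx f z) * Im (dy f z) - Im (dx f z) * Re (dy f z)"
  unfolding jac_def dz_def dzbar_def cmod_power2
  by (simp add: power2_eq_square field_simps)

lemma dir_dil_formula:
  assumes J: "jac f z > 0" and d: "f differentiable (at z)"
  shows "dir_dil f \<alpha> z = (cmod (frechet_derivative f (at z) (exp (\<i> * of_real \<alpha>))))\<^sup>2 / jac f z"
proof -
  define X where "X = dx f z"
  define Y where "Y = dy f z"
  define c where "c = cos \<alpha>"
  define s where "s = sin \<alpha>"
  define A where "A = dz f z"
  define B where "B = dzbar f z"
  have cs: "c^2 + s^2 = 1" by (simp add: c_def s_def)
  have JAB: "jac f z = (cmod A)^2 - (cmod B)^2" by (simp add: jac_def A_def B_def)
  have A0: "A \<noteq> 0" using J JAB by (auto simp: A_def)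
  have cA: "cmod A > 0" using A0 by simp
  have E: "exp (\<i> * of_real \<alpha>) = Complex c s" by (simp add: c_def s_def exp_Euler complex_eq_iff cos_of_real sin_of_real)
  have L: "frechet_derivative f (at z) (exp (\<i> * of_real \<alpha>)) = of_real c * X + of_real s * Y"
    by (simp add: deriv_decomp[OF d] E X_def Y_def)
  have E2: "exp (- 2 * \<i> * complex_of_real \<alpha>) = (of_real c - \<i> * of_real s)^2"
  proof -
    have "exp (- 2 * \<i> * complex_of_real \<alpha>) = (exp (- \<i> * complex_of_real \<alpha>))^2"
      by (simp add: exp_double[symmetric] algebra_simps power2_eq_square exp_add[symmetric])
    also have "exp (- \<i> * complex_of_real \<alpha>) = of_real c - \<i> * of_real s"
      by (simp add: c_def s_def complex_eq_iff Re_exp Im_exp)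
    finally show ?thesis .
  qed
  have key: "A + (of_real c - \<i> * of_real s)^2 * B = (of_real c - \<i> * of_real s) * (of_real c * X + of_real s * Y)"
  proof -
    have cs': "(of_real c :: complex)^2 + (of_real s)^2 = 1" using cs by (metis of_real_add of_real_power of_real_1)
    show ?thesis unfolding A_def B_def dz_def dzbar_def X_def[symmetric] Y_def[symmetric]
      using cs' by (simp add: field_simps power2_eq_square) algebra
  qed
  have m1: "cmod (of_real c - \<i> * of_real s) = 1"
    using cs by (simp add: cmod_def power2_eq_square)
  have num: "1 + exp (- 2 * \<i> * complex_of_real \<alpha>) * cdil f z = (of_real c - \<i> * of_real s) * (of_real c * X + of_real s * Y) / A"
  proof -
    have "1 + exp (- 2 * \<i> * complex_of_real \<alpha>) * cdil f z = (A + exp (- 2 * \<i> * complex_of_real \<alpha>) * B) / A"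
      using A0 by (simp add: cdil_def A_def[symmetric] B_def[symmetric] field_simps)
    also have "\<dots> = (of_real c - \<i> * of_real s) * (of_real c * X + of_real s * Y) / A"
      unfolding E2 key ..
    finally show ?thesis .
  qed
  have "dir_dil f \<alpha> z = (cmod (of_real c * X + of_real s * Y) / cmod A)^2 / (1 - (cmod B / cmod A)^2)"
    unfolding dir_dil_def num by (simp add: norm_mult norm_divide m1 cdil_def A_def B_def)
  also have "\<dots> = (cmod (of_real c * X + of_real s * Y))^2 / ((cmod A)^2 - (cmod B)^2)"
    using cA by (simp add: field_simps power2_eq_square)
  finally show ?thesis by (simp add: L JAB)
qed


locale S29 =
  fixes f g :: "complex \<Rightarrow> complex" and U :: "complex set" and b :: real
  assumes b: "b > 1"
    and U: "open U" "annulus b \<subseteq> U"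
    and homeo: "homeomorphism U (f ` U) f g"
    and C1: "\<forall>z\<in>U. f differentiable (at z)"
           "continuous_on U (dx f)" "continuous_on U (dy f)"
    and Jpos: "\<forall>z\<in>annulus b. jac f z > 0"
begin

definition "A = annulus b"
definition "Dz z = (cmod (rad_deriv f z))\<^sup>2 / jac f z"
definition "E \<theta> = exp (\<i> * complex_of_real \<theta>)"
definition "P r \<theta> = complex_of_real r * E \<theta>"
definition "Iv u = integral {1..b} (\<lambda>r. Dz (complex_of_real r * u) / r)"

lemma A_U: "z \<in> A \<Longrightarrow> z \<in> U" using U by (auto simp: A_def)
lemma A_ne0: "z \<in> A \<Longrightarrow> z \<noteq> 0" by (auto simp: A_def annulus_def)
lemma A_jac: "z \<in> A \<Longrightarrow> jac f z > 0" using Jpos by (auto simp: A_def)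
lemma A_diff: "z \<in> A \<Longrightarrow> f differentiable (at z)" using C1(1) A_U by auto
lemma compact_A: "compact A"
proof -
  have "A = cball 0 b - ball 0 1" by (auto simp: A_def annulus_def)
  then show ?thesis by (simp add: compact_diff)
qed

lemma rad_deriv_decomp: "z \<in> A \<Longrightarrow> rad_deriv f z = of_real (Re z / cmod z) * dx f z + of_real (Im z / cmod z) * dy f z"
  unfolding rad_deriv_def by (simp add: deriv_decomp[OF A_diff] Re_divide_of_real Im_divide_of_real)

lemma cont_dx: "continuous_on A (dx f)" and cont_dy: "continuous_on A (dy f)"
  using C1 A_U by (auto intro: continuous_on_subset)

lemma cont_jac: "continuous_on A (jac f)"
  unfolding jac_formula[abs_def] using cont_dx cont_dy by (intro continuous_intros)

lemma cont_rad: "continuous_on A (rad_deriv f)"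
proof -
  have "continuous_on A (\<lambda>z. of_real (Re z / cmod z) * dx f z + of_real (Im z / cmod z) * dy f z)"
    using cont_dx cont_dy A_ne0 by (intro continuous_intros) auto
  then show ?thesis by (rule continuous_on_eq) (simp add: rad_deriv_decomp)
qed

lemma cont_Dz: "continuous_on A Dz"
  unfolding Dz_def[abs_def] using cont_rad cont_jac
  by (intro continuous_intros) (fastforce dest: A_jac)+

lemma rad_ne0: assumes z: "z \<in> A" shows "rad_deriv f z \<noteq> 0"
proof
  assume r0: "rad_deriv f z = 0"
  define c where "c = Re z / cmod z"
  define s where "s = Im z / cmod z"
  have cs: "c^2 + s^2 = 1" using A_ne0[OF z]
    by (simp add: c_def s_def power_divide cmod_power2[symmetric] add_divide_distrib[symmetric])
  have e1: "c * Re (dx f z) + s * Re (dy f z) = 0" and e2: "c * Im (dx f z) + s * Im (dy f z) = 0"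
    using r0 rad_deriv_decomp[OF z] by (simp_all add: c_def s_def complex_eq_iff)
  define J where "J = Re (dx f z) * Im (dy f z) - Im (dx f z) * Re (dy f z)"
  have h1: "c * Re (dx f z) = - (s * Re (dy f z))" using e1 by linarith
  have h2: "c * Im (dx f z) = - (s * Im (dy f z))" using e2 by linarith
  have h3: "s * Re (dy f z) = - (c * Re (dx f z))" using e1 by linarith
  have h4: "s * Im (dy f z) = - (c * Im (dx f z))" using e2 by linarith
  have "c * J = (c * Re (dx f z)) * Im (dy f z) - (c * Im (dx f z)) * Re (dy f z)" by (simp add: J_def algebra_simps)
  also have "\<dots> = 0" unfolding h1 h2 by (simp add: algebra_simps)
  finally have cJ: "c * J = 0" .
  have "s * J = Re (dx f z) * (s * Im (dy f z)) - Im (dx f z) * (s * Re (dy f z))" by (simp add: J_def algebra_simps)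
  also have "\<dots> = 0" unfolding h3 h4 by (simp add: algebra_simps)
  finally have sJ: "s * J = 0" .
  from cJ sJ have "J = 0" using cs
    by (metis (no_types, lifting) mult_eq_0_iff power2_eq_square zero_neq_one add.right_neutral)
  then show False using A_jac[OF z] by (simp add: J_def jac_formula)
qed

lemma Dz_pos: "z \<in> A \<Longrightarrow> Dz z > 0"
  using rad_ne0 A_jac by (simp add: Dz_def)


lemma A_nonempty: "A \<noteq> {}"
proof -
  have "complex_of_real b \<in> A" using b by (simp add: A_def annulus_def)
  then show ?thesis by blast
qed

lemma Dz_lower: obtains \<delta> where "\<delta> > 0" "\<And>z. z \<in> A \<Longrightarrow> \<delta> \<le> Dz z"
proof -
  obtain z0 where "z0 \<in> A" "\<And>y. y \<in> A \<Longrightarrow> Dz z0 \<le> Dz y"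
    using continuous_attains_inf[OF compact_A A_nonempty cont_Dz] by blast
  then show ?thesis using that[of "Dz z0"] Dz_pos by blast
qed

lemma Dz_upper: obtains \<Delta> where "\<And>z. z \<in> A \<Longrightarrow> Dz z \<le> \<Delta>"
  using continuous_attains_sup[OF compact_A A_nonempty cont_Dz] by blast

lemma jac_upper: obtains JM where "\<And>z. z \<in> A \<Longrightarrow> jac f z \<le> JM"
  using continuous_attains_sup[OF compact_A A_nonempty cont_jac] by blast

lemma norm_E[simp]: "cmod (E \<theta>) = 1" by (simp add: E_def)
lemma norm_P: "r \<ge> 0 \<Longrightarrow> cmod (P r \<theta>) = r" by (simp add: P_def norm_mult)
lemma P_in_A: "r \<in> {1..b} \<Longrightarrow> P r \<theta> \<in> A" by (simp add: A_def annulus_def norm_P)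
lemma ru_in_A: "cmod u = 1 \<Longrightarrow> r \<in> {1..b} \<Longrightarrow> complex_of_real r * u \<in> A"
  by (simp add: A_def annulus_def norm_mult)
lemma P_dir: "r > 0 \<Longrightarrow> P r \<theta> / complex_of_real (cmod (P r \<theta>)) = E \<theta>"
  by (subst norm_P) (auto simp: P_def)

lemma dir_dil_A: "z \<in> A \<Longrightarrow> E \<alpha> = z / complex_of_real (cmod z) \<Longrightarrow> dir_dil f \<alpha> z = Dz z"
  using dir_dil_formula[OF A_jac A_diff, of z \<alpha>] by (simp add: Dz_def rad_deriv_def E_def)

lemma dir_dil_P: "r \<in> {1..b} \<Longrightarrow> dir_dil f \<theta> (P r \<theta>) = Dz (P r \<theta>)"
  by (rule dir_dil_A[OF P_in_A]) (auto simp: P_dir)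

lemma rdi_Iv: "radial_dil_integral f b \<theta> = Iv (E \<theta>)"
  unfolding radial_dil_integral_def Iv_def
  by (intro integral_cong) (use dir_dil_P in \<open>auto simp: P_def E_def\<close>)

lemma E_Arg: "z \<noteq> 0 \<Longrightarrow> E (Arg z) = z / complex_of_real (cmod z)"
proof -
  assume z: "z \<noteq> 0"
  have "z = of_real (norm z) * exp (\<i> * of_real (Arg z))" using Arg_eq[OF z] by simp
  then have "z / complex_of_real (cmod z) = exp (\<i> * of_real (Arg z))" using z
    by (metis nonzero_mult_div_cancel_left norm_eq_zero of_real_eq_0_iff)
  then show ?thesis by (simp add: E_def)
qed

lemma dir_dil_Arg: "z \<in> A \<Longrightarrow> dir_dil f (Arg z) z = Dz z"
  by (rule dir_dil_A) (auto simp: E_Arg A_ne0)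

lemma rdi_Arg: "z \<in> A \<Longrightarrow> radial_dil_integral f b (Arg z) = Iv (z / complex_of_real (cmod z))"
  by (simp add: rdi_Iv E_Arg A_ne0)

lemma Iv_integral:
  assumes u: "cmod u = 1"
  shows "((\<lambda>r. Dz (complex_of_real r * u) / r) has_integral Iv u) {1..b}"
proof -
  have "continuous_on {1..b} (\<lambda>r. Dz (complex_of_real r * u))"
    by (rule continuous_on_compose2[OF cont_Dz]) (auto intro!: continuous_intros ru_in_A[OF u])
  then have "continuous_on {1..b} (\<lambda>r. Dz (complex_of_real r * u) / r)"
    by (intro continuous_intros) auto
  then show ?thesis unfolding Iv_def
    by (intro integrable_integral integrable_continuous_interval)
qed

lemma Iv_lower:
  assumes u: "cmod u = 1" and \<delta>: "\<And>z. z \<in> A \<Longrightarrow> \<delta> \<le> Dz z"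
  shows "\<delta> / b * (b - 1) \<le> Iv u"
proof -
  have "((\<lambda>r. \<delta> / b) has_integral \<delta> / b * (b - 1)) {1..b}"
    using has_integral_const_real[of "\<delta>/b" 1 b] b by (simp add: mult.commute)
  moreover have "\<delta> / b \<le> Dz (complex_of_real r * u) / r" if r: "r \<in> {1..b}" for r
  proof -
    have d: "\<delta> \<le> Dz (complex_of_real r * u)" using \<delta>[OF ru_in_A[OF u r]] .
    have "0 \<le> Dz (complex_of_real r * u)" using Dz_pos[OF ru_in_A[OF u r]] by simp
    then have "\<delta> / b \<le> Dz (complex_of_real r * u) / b" using d b by (simp add: divide_right_mono)
    also have "\<dots> \<le> Dz (complex_of_real r * u) / r" using r b \<open>0 \<le> Dz _\<close>
      by (intro divide_left_mono) auto
    finally show ?thesis .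
  qed
  ultimately show ?thesis by (intro has_integral_le[OF _ Iv_integral[OF u]])
qed


definition "Sp = {1..b} \<times> {0..<2*pi}"
definition "\<Phi> p = f (P (fst p) (snd p))"
definition "\<Phi>' p = (\<lambda>q. frechet_derivative f (at (P (fst p) (snd p)))
      (complex_of_real (fst q) * E (snd p) + \<i> * complex_of_real (snd q) * complex_of_real (fst p) * E (snd p)))"

lemma Sp_P: "p \<in> Sp \<Longrightarrow> P (fst p) (snd p) \<in> A"
  by (auto simp: Sp_def intro!: P_in_A)

lemma P_deriv: "((\<lambda>p. P (fst p) (snd p)) has_derivative
   (\<lambda>q. complex_of_real (fst q) * E (snd p) + \<i> * complex_of_real (snd q) * complex_of_real (fst p) * E (snd p))) (at p)"
proof -
  have e: "((\<lambda>t::real. exp (\<i> * complex_of_real t)) has_derivative (\<lambda>h. h *\<^sub>R (\<i> * exp (\<i> * complex_of_real (snd p))))) (at (snd p))"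
  proof -
    have l: "((\<lambda>t::real. \<i> * complex_of_real t) has_derivative (\<lambda>h. \<i> * complex_of_real h)) (at (snd p))"
      by (auto intro!: derivative_eq_intros)
    have ex: "(exp has_derivative (\<lambda>h. exp (\<i> * complex_of_real (snd p)) * h)) (at (\<i> * complex_of_real (snd p)))"
      using DERIV_exp[of "\<i> * complex_of_real (snd p)"] by (simp add: has_field_derivative_def)
    from diff_chain_at[OF l ex] show ?thesis by (simp add: comp_def scaleR_conv_of_real algebra_simps)
  qed
  have e2: "((\<lambda>x. exp (\<i> * complex_of_real (snd x))) has_derivative (\<lambda>h. snd h *\<^sub>R (\<i> * exp (\<i> * complex_of_real (snd p))))) (at p)"
    using diff_chain_at[OF has_derivative_snd[OF has_derivative_ident] e] by (simp add: comp_def)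
  have e1: "((\<lambda>x. complex_of_real (fst x)) has_derivative (\<lambda>h. complex_of_real (fst h))) (at p)"
    by (auto intro!: derivative_eq_intros)
  from has_derivative_mult[OF e1 e2] show ?thesis
    unfolding P_def E_def by (simp add: algebra_simps scaleR_conv_of_real)
qed

lemma Phi_deriv: assumes p: "p \<in> Sp" shows "(\<Phi> has_derivative \<Phi>' p) (at p within Sp)"
proof -
  have "(f has_derivative frechet_derivative f (at (P (fst p) (snd p)))) (at (P (fst p) (snd p)))"
    using A_diff[OF Sp_P[OF p]] by (simp add: frechet_derivative_works)
  from diff_chain_at[OF P_deriv this] show ?thesis
    unfolding \<Phi>_def[abs_def] \<Phi>'_def comp_def by (rule has_derivative_at_withinI)
qed

lemma jdet_Phi: assumes p: "p \<in> Sp" shows "jdet (\<Phi>' p) = fst p * jac f (P (fst p) (snd p))"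
proof -
  obtain r \<theta> where pe: "p = (r, \<theta>)" by (cases p)
  have d: "f differentiable (at (P r \<theta>))" using A_diff[OF Sp_P[OF p]] by (simp add: pe)
  have ReE: "Re (E \<theta>) = cos \<theta>" and ImE: "Im (E \<theta>) = sin \<theta>" by (simp_all add: E_def Re_exp Im_exp)
  define X where "X = dx f (P r \<theta>)"
  define Y where "Y = dy f (P r \<theta>)"
  have "jdet (\<Phi>' p) = Re (of_real (cos \<theta>) * X + of_real (sin \<theta>) * Y) * Im (of_real (- r * sin \<theta>) * X + of_real (r * cos \<theta>) * Y)
      - Im (of_real (cos \<theta>) * X + of_real (sin \<theta>) * Y) * Re (of_real (- r * sin \<theta>) * X + of_real (r * cos \<theta>) * Y)"
    unfolding jdet_def \<Phi>'_def pe by (simp add: deriv_decomp[OF d] ReE ImE X_def Y_def)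
  also have "\<dots> = (cos \<theta> * Re X + sin \<theta> * Re Y) * (- r * sin \<theta> * Im X + r * cos \<theta> * Im Y)
      - (cos \<theta> * Im X + sin \<theta> * Im Y) * (- r * sin \<theta> * Re X + r * cos \<theta> * Re Y)"
    by simp
  also have "\<dots> = r * ((sin \<theta>)^2 + (cos \<theta>)^2) * (Re X * Im Y - Im X * Re Y)"
    by (simp only: power2_eq_square) algebra
  also have "\<dots> = r * jac f (P r \<theta>)" by (simp add: jac_formula X_def Y_def)
  finally show ?thesis by (simp add: pe)
qed

lemma g_f: "z \<in> U \<Longrightarrow> g (f z) = z" using homeo by (simp add: homeomorphism_def)
lemma cont_f: "continuous_on U f" using homeo by (simp add: homeomorphism_def)
lemma cont_g: "continuous_on (f ` U) g" using homeo by (simp add: homeomorphism_def)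

lemma P_inj: assumes "p \<in> Sp" "q \<in> Sp" "P (fst p) (snd p) = P (fst q) (snd q)" shows "p = q"
proof -
  obtain r \<theta> r' \<theta>' where pe: "p = (r, \<theta>)" "q = (r', \<theta>')" by (cases p, cases q)
  have r: "r \<ge> 1" "r' \<ge> 1" "0 \<le> \<theta>" "\<theta> < 2*pi" "0 \<le> \<theta>'" "\<theta>' < 2*pi" using assms by (auto simp: pe Sp_def)
  have eq: "P r \<theta> = P r' \<theta>'" using assms by (simp add: pe)
  then have rr: "r = r'" using norm_P[of r \<theta>] norm_P[of r' \<theta>'] r by simp
  have a1: "Arg2pi (P r \<theta>) = \<theta>" using r by (intro Arg2pi_unique[of r]) (auto simp: P_def E_def)
  have a2: "Arg2pi (P r' \<theta>') = \<theta>'" using r by (intro Arg2pi_unique[of r']) (auto simp: P_def E_def)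
  have "\<theta> = Arg2pi (P r \<theta>)" using a1 by (rule sym)
  also have "\<dots> = Arg2pi (P r' \<theta>')" using eq by (rule arg_cong)
  also have "\<dots> = \<theta>'" by (rule a2)
  finally have "\<theta> = \<theta>'" .
  then show ?thesis using rr by (simp add: pe)
qed

lemma Phi_inj: "inj_on \<Phi> Sp"
proof (rule inj_onI)
  fix p q assume pq: "p \<in> Sp" "q \<in> Sp" "\<Phi> p = \<Phi> q"
  then have "g (f (P (fst p) (snd p))) = g (f (P (fst q) (snd q)))" by (simp add: \<Phi>_def)
  then have "P (fst p) (snd p) = P (fst q) (snd q)" using g_f A_U Sp_P pq by metis
  then show "p = q" using P_inj pq by blast
qed

lemma P_image: "(\<lambda>p. P (fst p) (snd p)) ` Sp = A"
proof
  show "(\<lambda>p. P (fst p) (snd p)) ` Sp \<subseteq> A" using Sp_P by auto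
  show "A \<subseteq> (\<lambda>p. P (fst p) (snd p)) ` Sp"
  proof
    fix z assume z: "z \<in> A"
    have a: "0 \<le> Arg2pi z" "Arg2pi z < 2*pi" "z = of_real (norm z) * exp (\<i> * of_real (Arg2pi z))"
      using Arg2pi[of z] by (auto simp: is_Arg_def)
    have "(cmod z, Arg2pi z) \<in> Sp" using z a by (auto simp: Sp_def A_def annulus_def)
    moreover have "z = P (cmod z) (Arg2pi z)" using a by (simp add: P_def E_def)
    ultimately show "z \<in> (\<lambda>p. P (fst p) (snd p)) ` Sp" by force
  qed
qed

lemma Phi_image: "\<Phi> ` Sp = f ` A"
proof -
  have "\<Phi> ` Sp = f ` ((\<lambda>p. P (fst p) (snd p)) ` Sp)" by (simp add: \<Phi>_def image_image)
  then show ?thesis by (simp add: P_image)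
qed

lemma fA_compact: "compact (f ` A)"
proof -
  have "A \<subseteq> U" using A_U by blast
  then show ?thesis by (rule compact_continuous_image[OF continuous_on_subset[OF cont_f] compact_A])
qed

lemma fA_borel: "f ` A \<in> sets borel"
  using fA_compact by (simp add: borel_compact)

lemma Sp_borel: "Sp \<in> sets borel"
  unfolding Sp_def borel_prod[symmetric] by (intro pair_measureI) auto
lemma Sp_bounded: "bounded Sp"
proof -
  have "bounded ({1..b} \<times> {0..2*pi})" by (intro bounded_Times) auto
  moreover have "Sp \<subseteq> {1..b} \<times> {0..2*pi}" by (auto simp: Sp_def)
  ultimately show ?thesis by (rule bounded_subset)
qed

lemma cont_jacP: "continuous_on Sp (\<lambda>p. jac f (P (fst p) (snd p)))"
proof (rule continuous_on_compose2[OF cont_jac])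
  show "continuous_on Sp (\<lambda>p. P (fst p) (snd p))" unfolding P_def E_def by (intro continuous_intros)
qed (use Sp_P in auto)

lemma cont_Phi: "continuous_on Sp \<Phi>"
  unfolding \<Phi>_def
proof (rule continuous_on_compose2[OF cont_f])
  show "continuous_on Sp (\<lambda>p. P (fst p) (snd p))" unfolding P_def E_def by (intro continuous_intros)
qed (use Sp_P A_U in auto)


lemma w_meas: "(\<lambda>p. indicator Sp p *\<^sub>R (fst p * jac f (P (fst p) (snd p)))) \<in> borel_measurable borel"
  by (rule borel_measurable_continuous_on_indicator[OF Sp_borel])
     (intro continuous_intros cont_jacP)

lemma Phi0_meas: "(\<lambda>p. indicator Sp p *\<^sub>R \<Phi> p) \<in> borel_measurable borel"
  by (rule borel_measurable_continuous_on_indicator[OF Sp_borel cont_Phi])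

lemma cov_main:
  assumes h[measurable]: "h \<in> borel_measurable borel"
  shows "(\<integral>\<^sup>+z. indicator (f`A) z * h z \<partial>lborel)
       = (\<integral>\<^sup>+\<theta>. indicator {0..<2*pi} \<theta> *
            (\<integral>\<^sup>+r. indicator {1..b} r * ennreal (r * jac f (P r \<theta>)) * h (f (P r \<theta>)) \<partial>lborel) \<partial>lborel)"
proof -
  obtain JM where JM: "\<And>z. z \<in> A \<Longrightarrow> jac f z \<le> JM" using jac_upper by blast
  have jd: "jdet (\<Phi>' p) = fst p * jac f (P (fst p) (snd p))" "fst p * jac f (P (fst p) (snd p)) > 0"
    if "p \<in> Sp" for p
    using jdet_Phi[OF that] A_jac[OF Sp_P[OF that]] that by (auto simp: Sp_def)
  have M: "\<bar>jdet (\<Phi>' p)\<bar> \<le> b * JM" if p: "p \<in> Sp" for p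
  proof -
    have "\<bar>jdet (\<Phi>' p)\<bar> = fst p * jac f (P (fst p) (snd p))" using jd[OF p] by simp
    also have "\<dots> \<le> b * JM"
      using p JM[OF Sp_P[OF p]] A_jac[OF Sp_P[OF p]] b by (auto simp: Sp_def intro: mult_mono)
    finally show ?thesis .
  qed
  have dm: "(\<lambda>p. indicator Sp p * \<bar>jdet (\<Phi>' p)\<bar>) \<in> borel_measurable borel"
  proof -
    have "(\<lambda>p. indicator Sp p * \<bar>jdet (\<Phi>' p)\<bar>) = (\<lambda>p. indicator Sp p *\<^sub>R (fst p * jac f (P (fst p) (snd p))))"
    proof
      fix p show "indicator Sp p * \<bar>jdet (\<Phi>' p)\<bar> = indicator Sp p *\<^sub>R (fst p * jac f (P (fst p) (snd p)))"
        using jd[of p] by (cases "p \<in> Sp") auto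
    qed
    then show ?thesis using w_meas by simp
  qed
  have SB: "\<Phi> ` Sp \<in> sets borel" using fA_borel by (simp add: Phi_image)
  have c: "(\<integral>\<^sup>+z. indicator (\<Phi>`Sp) z * h z \<partial>lborel)
       = (\<integral>\<^sup>+p. indicator Sp p * ennreal \<bar>jdet (\<Phi>' p)\<bar> * h (\<Phi> p) \<partial>lborel)"
    by (rule cov_pair[OF Sp_borel SB Phi_deriv Phi_inj Sp_bounded M dm h])
  define G where "G p = indicator Sp p * ennreal (indicator Sp p *\<^sub>R (fst p * jac f (P (fst p) (snd p)))) * h (indicator Sp p *\<^sub>R \<Phi> p)" for p
  have Gm: "G \<in> borel_measurable borel" unfolding G_def using w_meas Phi0_meas Sp_borel by measurable
  have Gm2: "G \<in> borel_measurable (lborel \<Otimes>\<^sub>M lborel)" using Gm by (simp add: lborel_prod)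
  have "(\<integral>\<^sup>+p. indicator Sp p * ennreal \<bar>jdet (\<Phi>' p)\<bar> * h (\<Phi> p) \<partial>lborel) = (\<integral>\<^sup>+p. G p \<partial>lborel)"
  proof (intro nn_integral_cong)
    fix p show "indicator Sp p * ennreal \<bar>jdet (\<Phi>' p)\<bar> * h (\<Phi> p) = G p"
      using jd[of p] by (cases "p \<in> Sp") (auto simp: G_def)
  qed
  also have "\<dots> = (\<integral>\<^sup>+p. G p \<partial>(lborel \<Otimes>\<^sub>M lborel))" by (simp add: lborel_prod)
  also have "\<dots> = (\<integral>\<^sup>+\<theta>. (\<integral>\<^sup>+r. G (r, \<theta>) \<partial>lborel) \<partial>lborel)"
    by (rule lborel_pair.nn_integral_snd[symmetric, OF Gm2])
  also have "\<dots> = (\<integral>\<^sup>+\<theta>. indicator {0..<2*pi} \<theta> *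
            (\<integral>\<^sup>+r. indicator {1..b} r * ennreal (r * jac f (P r \<theta>)) * h (f (P r \<theta>)) \<partial>lborel) \<partial>lborel)"
  proof (intro nn_integral_cong)
    fix \<theta> :: real
    show "(\<integral>\<^sup>+r. G (r, \<theta>) \<partial>lborel) = indicator {0..<2*pi} \<theta> *
            (\<integral>\<^sup>+r. indicator {1..b} r * ennreal (r * jac f (P r \<theta>)) * h (f (P r \<theta>)) \<partial>lborel)"
    proof (cases "\<theta> \<in> {0..<2*pi}")
      case True
      then show ?thesis
        by (simp, intro nn_integral_cong) (auto simp: G_def Sp_def \<Phi>_def split: split_indicator)
    next
      case False
      then show ?thesis by (simp add: G_def Sp_def)
    qed
  qed
  finally show ?thesis using c by (simp add: Phi_image)
qed


lemma I_lower: obtains Imin where "Imin > 0" "\<And>\<theta>. Imin \<le> Iv (E \<theta>)"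
proof -
  obtain \<delta> where d: "\<delta> > 0" "\<And>z. z \<in> A \<Longrightarrow> \<delta> \<le> Dz z" using Dz_lower by blast
  show ?thesis
    by (rule that[of "\<delta> / b * (b - 1)"]) (use d b Iv_lower[OF norm_E d(2)] in auto)
qed

lemma I_pos: "Iv (E \<theta>) > 0"
  using I_lower by (metis less_le_trans)

lemma curve_eq: "(\<lambda>r. f (complex_of_real r * exp (\<i> * complex_of_real \<theta>))) = (\<lambda>r. f (P r \<theta>))"
  by (simp add: P_def E_def)

lemma curve_vd:
  assumes t: "t \<in> {1..b}"
  shows "vector_derivative (\<lambda>r. f (P r \<theta>)) (at t within {1..b}) = rad_deriv f (P t \<theta>)"
proof -
  have z: "P t \<theta> \<in> A" using P_in_A[OF t] .
  have fd: "(f has_derivative frechet_derivative f (at (P t \<theta>))) (at (P t \<theta>))"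
    using A_diff[OF z] by (simp add: frechet_derivative_works)
  have pd: "((\<lambda>r. P r \<theta>) has_derivative (\<lambda>h. h *\<^sub>R E \<theta>)) (at t)"
    unfolding P_def by (auto intro!: derivative_eq_intros simp: scaleR_conv_of_real)
  have lin: "linear (frechet_derivative f (at (P t \<theta>)))" using fd has_derivative_linear by blast
  from diff_chain_at[OF pd fd]
  have "((\<lambda>r. f (P r \<theta>)) has_derivative (\<lambda>h. h *\<^sub>R frechet_derivative f (at (P t \<theta>)) (E \<theta>))) (at t)"
    by (simp add: comp_def linear_scale[OF lin])
  then have "((\<lambda>r. f (P r \<theta>)) has_vector_derivative frechet_derivative f (at (P t \<theta>)) (E \<theta>)) (at t within {1..b})"
    by (simp add: has_vector_derivative_def has_derivative_at_withinI)
  moreover have "frechet_derivative f (at (P t \<theta>)) (E \<theta>) = rad_deriv f (P t \<theta>)"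
    using t by (simp add: rad_deriv_def P_dir)
  ultimately show ?thesis using b t vector_derivative_within_cbox[of 1 b t] by simp
qed

lemma ds_P:
  "ds_integral \<rho> (\<lambda>r. f (complex_of_real r * exp (\<i> * complex_of_real \<theta>))) 1 b
   = (\<integral>\<^sup>+t. indicator {1..b} t * \<rho> (f (P t \<theta>)) * ennreal (cmod (rad_deriv f (P t \<theta>))) \<partial>lborel)"
  unfolding ds_integral_def curve_eq
  by (intro nn_integral_cong) (auto simp: curve_vd split: split_indicator)

lemma curve_meas:
  fixes \<rho> :: "complex \<Rightarrow> ennreal"
  assumes [measurable]: "\<rho> \<in> borel_measurable borel"
  shows "(\<lambda>t. indicator {1..b} t * \<rho> (f (P t \<theta>))) \<in> borel_measurable borel"
proof -
  have c: "continuous_on {1..b} (\<lambda>t. f (P t \<theta>))"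
  proof (rule continuous_on_compose2[OF cont_f])
    show "continuous_on {1..b} (\<lambda>t. P t \<theta>)" unfolding P_def by (intro continuous_intros)
  qed (use P_in_A A_U in auto)
  have [measurable]: "(\<lambda>t. indicator {1..b} t *\<^sub>R f (P t \<theta>)) \<in> borel_measurable borel"
    by (rule borel_measurable_continuous_on_indicator[OF _ c]) simp
  have "(\<lambda>t. indicator {1..b} t * \<rho> (f (P t \<theta>))) = (\<lambda>t. indicator {1..b} t * \<rho> (indicator {1..b} t *\<^sub>R f (P t \<theta>)))"
    by (auto simp: fun_eq_iff indicator_def)
  also have "\<dots> \<in> borel_measurable borel" by measurable
  finally show ?thesis .
qed

lemma q_pos: "r \<in> {1..b} \<Longrightarrow> cmod (rad_deriv f (P r \<theta>)) > 0"
  using rad_ne0[OF P_in_A] by simp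

lemma Dz_P: assumes "r \<in> {1..b}" shows "Dz (P r \<theta>) * jac f (P r \<theta>) = (cmod (rad_deriv f (P r \<theta>)))\<^sup>2"
proof -
  have "jac f (P r \<theta>) \<noteq> 0" using A_jac[OF P_in_A[OF assms, of \<theta>]] by simp
  then show ?thesis by (simp add: Dz_def)
qed

lemma Iv_int_P: "((\<lambda>r. Dz (P r \<theta>) / r) has_integral Iv (E \<theta>)) {1..b}"
  using Iv_integral[OF norm_E] by (simp add: P_def)

lemma cont_DzP: "continuous_on {1..b} (\<lambda>r. Dz (P r \<theta>) / r)"
proof -
  have "continuous_on {1..b} (\<lambda>r. Dz (P r \<theta>))"
    by (rule continuous_on_compose2[OF cont_Dz]) (auto intro!: continuous_intros simp: P_def P_in_A[unfolded P_def])
  then show ?thesis by (intro continuous_intros) auto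
qed


lemma cont_wP: "continuous_on {1..b} (\<lambda>r. r * jac f (P r \<theta>))"
proof -
  have "continuous_on {1..b} (\<lambda>r. jac f (P r \<theta>))"
    by (rule continuous_on_compose2[OF cont_jac]) (auto intro!: continuous_intros simp: P_def P_in_A[unfolded P_def])
  then show ?thesis by (intro continuous_intros)
qed

lemma wm_meas: "(\<lambda>r. indicator {1..b} r *\<^sub>R (r * jac f (P r \<theta>))) \<in> borel_measurable borel"
  by (rule borel_measurable_continuous_on_indicator[OF _ cont_wP]) simp

lemma Dm_meas: "(\<lambda>r. indicator {1..b} r *\<^sub>R (Dz (P r \<theta>) / r)) \<in> borel_measurable borel"
  by (rule borel_measurable_continuous_on_indicator[OF _ cont_DzP]) simp

lemma half_integral:
  "(\<integral>\<^sup>+r. indicator {1..b} r * ennreal ((cmod (rad_deriv f (P r \<theta>)))\<^sup>2 / (2 * (r * jac f (P r \<theta>)) * Iv (E \<theta>))) \<partial>lborel)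
   = ennreal (1/2)"
proof -
  define I where "I = Iv (E \<theta>)"
  have I: "I > 0" using I_pos by (simp add: I_def)
  have hi: "((\<lambda>r. (1 / (2 * I)) *\<^sub>R (Dz (P r \<theta>) / r)) has_integral (1 / (2 * I)) *\<^sub>R I) {1..b}"
    by (rule has_integral_cmul) (simp add: Iv_int_P I_def)
  have nn: "(\<integral>\<^sup>+r. ennreal ((1 / (2 * I)) *\<^sub>R (Dz (P r \<theta>) / r)) * indicator {1..b} r \<partial>lborel) = ennreal ((1 / (2 * I)) *\<^sub>R I)"
  proof (rule nn_integral_has_integral_lebesgue'[OF _ hi])
    fix r :: real assume r: "r \<in> {1..b}"
    have "0 \<le> Dz (P r \<theta>) / r" using Dz_pos[OF P_in_A[OF r, of \<theta>]] r by simp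
    moreover have "0 \<le> 1 / (2 * I)" using I by simp
    ultimately show "0 \<le> (1 / (2 * I)) *\<^sub>R (Dz (P r \<theta>) / r)" by (metis mult_nonneg_nonneg real_scaleR_def)
  qed
  have "(\<integral>\<^sup>+r. indicator {1..b} r * ennreal ((cmod (rad_deriv f (P r \<theta>)))\<^sup>2 / (2 * (r * jac f (P r \<theta>)) * Iv (E \<theta>))) \<partial>lborel)
     = (\<integral>\<^sup>+r. ennreal ((1 / (2 * I)) *\<^sub>R (Dz (P r \<theta>) / r)) * indicator {1..b} r \<partial>lborel)"
  proof (intro nn_integral_cong)
    fix r :: real
    show "indicator {1..b} r * ennreal ((cmod (rad_deriv f (P r \<theta>)))\<^sup>2 / (2 * (r * jac f (P r \<theta>)) * Iv (E \<theta>)))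
        = ennreal ((1 / (2 * I)) *\<^sub>R (Dz (P r \<theta>) / r)) * indicator {1..b} r"
    proof (cases "r \<in> {1..b}")
      case True
      have j: "jac f (P r \<theta>) > 0" using A_jac[OF P_in_A[OF True]] .
      have "(cmod (rad_deriv f (P r \<theta>)))\<^sup>2 / (2 * (r * jac f (P r \<theta>)) * Iv (E \<theta>)) = (1 / (2 * I)) *\<^sub>R (Dz (P r \<theta>) / r)"
        using Dz_P[OF True, of \<theta>, symmetric] j True I by (simp add: I_def field_simps)
      then show ?thesis using True by simp
    qed simp
  qed
  also have "\<dots> = ennreal (1/2)" using nn I by simp
  finally show ?thesis .
qed

lemma amgm_enn:
  fixes a :: ennreal and q k :: real
  assumes q: "q > 0" and k: "k > 0"
  shows "a * ennreal q \<le> ennreal (k / 2) * a\<^sup>2 + ennreal (q\<^sup>2 / (2 * k))"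
proof (cases a)
  case (real x)
  have "x * q \<le> k / 2 * x\<^sup>2 + q\<^sup>2 / (2 * k)"
  proof -
    have "k / 2 * x\<^sup>2 + q\<^sup>2 / (2 * k) - x * q = (k * x - q)\<^sup>2 / (2 * k)"
      using k by (simp add: field_simps power2_eq_square)
    moreover have "0 \<le> (k * x - q)\<^sup>2 / (2 * k)" using k by simp
    ultimately show ?thesis by linarith
  qed
  have x0: "x \<ge> 0" using real by simp
  have "ennreal (k / 2) * a\<^sup>2 + ennreal (q\<^sup>2 / (2 * k)) = ennreal (k / 2 * x\<^sup>2 + q\<^sup>2 / (2 * k))"
    using real x0 k by (simp add: ennreal_power ennreal_mult[symmetric] ennreal_plus)
  moreover have "a * ennreal q = ennreal (x * q)" using real x0 q by (simp add: ennreal_mult)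
  ultimately show ?thesis using \<open>x * q \<le> _\<close> by (simp add: ennreal_leI)
next
  case top
  then show ?thesis using q k by (simp add: ennreal_mult_top ennreal_top_mult)
qed

lemma lower_theta:
  fixes \<rho> :: "complex \<Rightarrow> ennreal"
  assumes \<rho>[measurable]: "\<rho> \<in> borel_measurable borel"
    and adm: "1 \<le> (\<integral>\<^sup>+t. indicator {1..b} t * \<rho> (f (P t \<theta>)) * ennreal (cmod (rad_deriv f (P t \<theta>))) \<partial>lborel)"
  shows "ennreal (inverse (Iv (E \<theta>))) \<le> (\<integral>\<^sup>+r. indicator {1..b} r * ennreal (r * jac f (P r \<theta>)) * (\<rho> (f (P r \<theta>)))\<^sup>2 \<partial>lborel)"
proof -
  define I where "I = Iv (E \<theta>)"
  have I: "I > 0" using I_pos by (simp add: I_def)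
  define X where "X = (\<integral>\<^sup>+r. indicator {1..b} r * ennreal (r * jac f (P r \<theta>)) * (\<rho> (f (P r \<theta>)))\<^sup>2 \<partial>lborel)"
  define F1 where "F1 r = indicator {1..b} r * ennreal (r * jac f (P r \<theta>)) * (\<rho> (f (P r \<theta>)))\<^sup>2" for r
  define F2 where "F2 r = indicator {1..b} r * ennreal ((cmod (rad_deriv f (P r \<theta>)))\<^sup>2 / (2 * (r * jac f (P r \<theta>)) * I))" for r
  have am[measurable]: "(\<lambda>t. indicator {1..b} t * \<rho> (f (P t \<theta>))) \<in> borel_measurable borel"
    by (rule curve_meas[OF \<rho>])
  have [measurable]: "(\<lambda>r. indicator {1..b} r *\<^sub>R (r * jac f (P r \<theta>))) \<in> borel_measurable borel" by (rule wm_meas)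
  have [measurable]: "(\<lambda>r. indicator {1..b} r *\<^sub>R (Dz (P r \<theta>) / r)) \<in> borel_measurable borel" by (rule Dm_meas)
  have F1m: "F1 \<in> borel_measurable borel"
  proof -
    have "F1 = (\<lambda>r. ennreal (indicator {1..b} r *\<^sub>R (r * jac f (P r \<theta>))) * (indicator {1..b} r * \<rho> (f (P r \<theta>)))\<^sup>2)"
      by (auto simp: fun_eq_iff F1_def indicator_def power2_eq_square)
    also have "\<dots> \<in> borel_measurable borel" by measurable
    finally show ?thesis .
  qed
  have F2m: "F2 \<in> borel_measurable borel"
  proof -
    have "F2 = (\<lambda>r. ennreal ((1 / (2 * I)) * (indicator {1..b} r *\<^sub>R (Dz (P r \<theta>) / r))))"
    proof
      fix r show "F2 r = ennreal ((1 / (2 * I)) * (indicator {1..b} r *\<^sub>R (Dz (P r \<theta>) / r)))"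
      proof (cases "r \<in> {1..b}")
        case True
        have j: "jac f (P r \<theta>) > 0" using A_jac[OF P_in_A[OF True]] .
        show ?thesis using Dz_P[OF True, of \<theta>, symmetric] j True I by (simp add: F2_def field_simps)
      qed (simp add: F2_def)
    qed
    also have "\<dots> \<in> borel_measurable borel" by measurable
    finally show ?thesis .
  qed
  have pw: "indicator {1..b} r * \<rho> (f (P r \<theta>)) * ennreal (cmod (rad_deriv f (P r \<theta>))) \<le> ennreal (I / 2) * F1 r + F2 r" for r
  proof (cases "r \<in> {1..b}")
    case True
    have j: "jac f (P r \<theta>) > 0" using A_jac[OF P_in_A[OF True]] .
    have w: "r * jac f (P r \<theta>) > 0" using True j by auto
    have k: "I * (r * jac f (P r \<theta>)) > 0" using I w by simp
    from amgm_enn[OF q_pos[OF True] k, of "\<rho> (f (P r \<theta>))"]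
    have "\<rho> (f (P r \<theta>)) * ennreal (cmod (rad_deriv f (P r \<theta>)))
        \<le> ennreal (I * (r * jac f (P r \<theta>)) / 2) * (\<rho> (f (P r \<theta>)))\<^sup>2 + ennreal ((cmod (rad_deriv f (P r \<theta>)))\<^sup>2 / (2 * (I * (r * jac f (P r \<theta>)))))" .
    moreover have "ennreal (I * (r * jac f (P r \<theta>)) / 2) = ennreal (I / 2) * ennreal (r * jac f (P r \<theta>))"
      using I w by (simp add: ennreal_mult'[symmetric])
    ultimately show ?thesis using True by (simp add: F1_def F2_def mult_ac)
  qed (simp add: F1_def F2_def)
  have "1 \<le> (\<integral>\<^sup>+t. indicator {1..b} t * \<rho> (f (P t \<theta>)) * ennreal (cmod (rad_deriv f (P t \<theta>))) \<partial>lborel)" by (rule adm)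
  also have "\<dots> \<le> (\<integral>\<^sup>+r. ennreal (I / 2) * F1 r + F2 r \<partial>lborel)" by (intro nn_integral_mono pw)
  also have "\<dots> = ennreal (I / 2) * X + ennreal (1/2)"
  proof -
    have "(\<integral>\<^sup>+r. ennreal (I / 2) * F1 r + F2 r \<partial>lborel) = (\<integral>\<^sup>+r. ennreal (I / 2) * F1 r \<partial>lborel) + (\<integral>\<^sup>+r. F2 r \<partial>lborel)"
      using F1m F2m by (intro nn_integral_add) auto
    also have "(\<integral>\<^sup>+r. ennreal (I / 2) * F1 r \<partial>lborel) = ennreal (I / 2) * X"
      using F1m by (simp add: nn_integral_cmult X_def F1_def[abs_def])
    also have "(\<integral>\<^sup>+r. F2 r \<partial>lborel) = ennreal (1/2)"
      using half_integral[of \<theta>] by (simp add: F2_def I_def)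
    finally show ?thesis .
  qed
  finally have main: "1 \<le> ennreal (I / 2) * X + ennreal (1/2)" .
  show ?thesis
  proof (cases X)
    case (real x)
    have x0: "x \<ge> 0" using real by simp
    have eq: "ennreal (I / 2) * X + ennreal (1/2) = ennreal (I / 2 * x + 1/2)"
      using real x0 I by (simp add: ennreal_mult[symmetric] ennreal_plus)
    have "1 \<le> ennreal (I / 2 * x + 1/2)" using main unfolding eq .
    then have "ennreal 1 \<le> ennreal (I / 2 * x + 1/2)" by (simp only: ennreal_1)
    then have "1 \<le> I / 2 * x + 1/2" using x0 I by (subst (asm) ennreal_le_iff) auto
    then have "inverse I \<le> x" using I by (simp add: field_simps)
    then show ?thesis using real by (simp add: X_def[symmetric] I_def[symmetric] ennreal_leI)
  next
    case top
    then show ?thesis by (simp add: X_def[symmetric] I_def[symmetric])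
  qed
qed


lemma rho0_P:
  assumes r: "r \<in> {1..b}"
  shows "rho0 f g b (f (P r \<theta>)) = ennreal ((Dz (P r \<theta>) / r) / (cmod (rad_deriv f (P r \<theta>)) * Iv (E \<theta>)))"
proof -
  have z: "P r \<theta> \<in> A" using P_in_A[OF r] .
  have gf: "g (f (P r \<theta>)) = P r \<theta>" using g_f[OF A_U[OF z]] .
  have nr: "cmod (P r \<theta>) = r" using r by (simp add: norm_P)
  have "radial_dil_integral f b (Arg (P r \<theta>)) = Iv (E \<theta>)"
    using rdi_Arg[OF z] P_dir[of r \<theta>] r by simp
  moreover have "dir_dil f (Arg (P r \<theta>)) (P r \<theta>) = Dz (P r \<theta>)" by (rule dir_dil_Arg[OF z])
  moreover have "f (P r \<theta>) \<in> f ` annulus b" using z by (simp add: A_def)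
  ultimately show ?thesis unfolding rho0_def Let_def gf nr by simp
qed

lemma Dzr_nonneg: "r \<in> {1..b} \<Longrightarrow> 0 \<le> Dz (P r \<theta>) / r"
  using Dz_pos[OF P_in_A, of r \<theta>] by simp

lemma rho0_curve:
  "(\<integral>\<^sup>+t. indicator {1..b} t * rho0 f g b (f (P t \<theta>)) * ennreal (cmod (rad_deriv f (P t \<theta>))) \<partial>lborel) = 1"
proof -
  define I where "I = Iv (E \<theta>)"
  have I: "I > 0" using I_pos by (simp add: I_def)
  have hi: "((\<lambda>r. (1 / I) *\<^sub>R (Dz (P r \<theta>) / r)) has_integral (1 / I) *\<^sub>R I) {1..b}"
    by (rule has_integral_cmul) (simp add: Iv_int_P I_def)
  have nn: "(\<integral>\<^sup>+r. ennreal ((1 / I) *\<^sub>R (Dz (P r \<theta>) / r)) * indicator {1..b} r \<partial>lborel) = ennreal ((1 / I) *\<^sub>R I)"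
  proof (rule nn_integral_has_integral_lebesgue'[OF _ hi])
    fix r :: real assume r: "r \<in> {1..b}"
    have "0 \<le> 1 / I" using I by simp
    then show "0 \<le> (1 / I) *\<^sub>R (Dz (P r \<theta>) / r)" using Dzr_nonneg[OF r, of \<theta>]
      by (metis mult_nonneg_nonneg real_scaleR_def)
  qed
  have "(\<integral>\<^sup>+t. indicator {1..b} t * rho0 f g b (f (P t \<theta>)) * ennreal (cmod (rad_deriv f (P t \<theta>))) \<partial>lborel)
      = (\<integral>\<^sup>+r. ennreal ((1 / I) *\<^sub>R (Dz (P r \<theta>) / r)) * indicator {1..b} r \<partial>lborel)"
  proof (intro nn_integral_cong)
    fix r :: real
    show "indicator {1..b} r * rho0 f g b (f (P r \<theta>)) * ennreal (cmod (rad_deriv f (P r \<theta>)))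
        = ennreal ((1 / I) *\<^sub>R (Dz (P r \<theta>) / r)) * indicator {1..b} r"
    proof (cases "r \<in> {1..b}")
      case True
      have q: "cmod (rad_deriv f (P r \<theta>)) > 0" using q_pos[OF True] .
      have D0: "0 \<le> Dz (P r \<theta>) / r" using Dzr_nonneg[OF True, of \<theta>] .
      have d0: "0 \<le> (Dz (P r \<theta>) / r) / (cmod (rad_deriv f (P r \<theta>)) * I)"
        using q I by (intro divide_nonneg_pos[OF D0] mult_pos_pos) auto
      have "rho0 f g b (f (P r \<theta>)) * ennreal (cmod (rad_deriv f (P r \<theta>)))
          = ennreal ((Dz (P r \<theta>) / r) / (cmod (rad_deriv f (P r \<theta>)) * I)) * ennreal (cmod (rad_deriv f (P r \<theta>)))"
        by (simp add: rho0_P[OF True] I_def)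
      also have "\<dots> = ennreal ((Dz (P r \<theta>) / r) / (cmod (rad_deriv f (P r \<theta>)) * I) * cmod (rad_deriv f (P r \<theta>)))"
        by (rule ennreal_mult[OF d0 norm_ge_zero, symmetric])
      also have "\<dots> = ennreal ((1 / I) *\<^sub>R (Dz (P r \<theta>) / r))" using q by (simp add: mult.commute)
      finally show ?thesis using True by simp
    qed simp
  qed
  also have "\<dots> = 1" using nn I by simp
  finally show ?thesis .
qed

lemma rho0_sq:
  "(\<integral>\<^sup>+r. indicator {1..b} r * ennreal (r * jac f (P r \<theta>)) * (rho0 f g b (f (P r \<theta>)))\<^sup>2 \<partial>lborel)
   = ennreal (inverse (Iv (E \<theta>)))"
proof -
  define I where "I = Iv (E \<theta>)"
  have I: "I > 0" using I_pos by (simp add: I_def)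
  have hi: "((\<lambda>r. (1 / I^2) *\<^sub>R (Dz (P r \<theta>) / r)) has_integral (1 / I^2) *\<^sub>R I) {1..b}"
    by (rule has_integral_cmul) (simp add: Iv_int_P I_def)
  have nn: "(\<integral>\<^sup>+r. ennreal ((1 / I^2) *\<^sub>R (Dz (P r \<theta>) / r)) * indicator {1..b} r \<partial>lborel) = ennreal ((1 / I^2) *\<^sub>R I)"
  proof (rule nn_integral_has_integral_lebesgue'[OF _ hi])
    fix r :: real assume r: "r \<in> {1..b}"
    have "0 \<le> 1 / I^2" using I by simp
    then show "0 \<le> (1 / I^2) *\<^sub>R (Dz (P r \<theta>) / r)" using Dzr_nonneg[OF r, of \<theta>]
      by (metis mult_nonneg_nonneg real_scaleR_def)
  qed
  have "(\<integral>\<^sup>+r. indicator {1..b} r * ennreal (r * jac f (P r \<theta>)) * (rho0 f g b (f (P r \<theta>)))\<^sup>2 \<partial>lborel)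
      = (\<integral>\<^sup>+r. ennreal ((1 / I^2) *\<^sub>R (Dz (P r \<theta>) / r)) * indicator {1..b} r \<partial>lborel)"
  proof (intro nn_integral_cong)
    fix r :: real
    show "indicator {1..b} r * ennreal (r * jac f (P r \<theta>)) * (rho0 f g b (f (P r \<theta>)))\<^sup>2
        = ennreal ((1 / I^2) *\<^sub>R (Dz (P r \<theta>) / r)) * indicator {1..b} r"
    proof (cases "r \<in> {1..b}")
      case True
      have q: "cmod (rad_deriv f (P r \<theta>)) > 0" using q_pos[OF True] .
      have j: "jac f (P r \<theta>) > 0" using A_jac[OF P_in_A[OF True]] .
      have dj: "Dz (P r \<theta>) * jac f (P r \<theta>) = (cmod (rad_deriv f (P r \<theta>)))\<^sup>2" using Dz_P[OF True] .
      have D0: "0 \<le> Dz (P r \<theta>) / r" using Dzr_nonneg[OF True, of \<theta>] .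
      have d0: "0 \<le> (Dz (P r \<theta>) / r) / (cmod (rad_deriv f (P r \<theta>)) * I)"
        using q I by (intro divide_nonneg_pos[OF D0] mult_pos_pos) auto
      have "ennreal (r * jac f (P r \<theta>)) * (rho0 f g b (f (P r \<theta>)))\<^sup>2
          = ennreal (r * jac f (P r \<theta>) * ((Dz (P r \<theta>) / r) / (cmod (rad_deriv f (P r \<theta>)) * I))\<^sup>2)"
        using d0 True j by (simp add: rho0_P[OF True] I_def ennreal_mult ennreal_power)
      also have "r * jac f (P r \<theta>) * ((Dz (P r \<theta>) / r) / (cmod (rad_deriv f (P r \<theta>)) * I))\<^sup>2
          = (Dz (P r \<theta>) * jac f (P r \<theta>)) * Dz (P r \<theta>) / (r * (cmod (rad_deriv f (P r \<theta>)))\<^sup>2 * I^2)"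
        using True q I by (simp add: field_simps power2_eq_square)
      also have "\<dots> = (1 / I^2) *\<^sub>R (Dz (P r \<theta>) / r)"
        unfolding dj using True q I by (simp add: field_simps power2_eq_square)
      finally show ?thesis using True by simp
    qed simp
  qed
  also have "\<dots> = ennreal (inverse I)" using nn I by (simp add: power2_eq_square field_simps)
  finally show ?thesis by (simp add: I_def)
qed


lemma A_borel: "A \<in> sets borel" using compact_A by (simp add: borel_compact)

definition "Dz0 z = indicator A z *\<^sub>R Dz z"
definition "KI u = (\<integral>\<^sup>+r. ennreal (indicator {1..b} r *\<^sub>R (Dz0 (complex_of_real r * u) / r)) \<partial>lborel)"

lemma Dz0_meas[measurable]: "Dz0 \<in> borel_measurable borel"
  unfolding Dz0_def[abs_def] by (rule borel_measurable_continuous_on_indicator[OF A_borel cont_Dz])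

lemma KI_meas[measurable]: "KI \<in> borel_measurable borel"
  unfolding KI_def[abs_def] by measurable

lemma KI_Iv: assumes u: "cmod u = 1" shows "KI u = ennreal (Iv u)"
proof -
  have "KI u = (\<integral>\<^sup>+r. ennreal (Dz (complex_of_real r * u) / r) * indicator {1..b} r \<partial>lborel)"
    unfolding KI_def
    by (intro nn_integral_cong) (auto simp: Dz0_def ru_in_A[OF u] split: split_indicator)
  also have "\<dots> = ennreal (Iv u)"
  proof (rule nn_integral_has_integral_lebesgue'[OF _ Iv_integral[OF u]])
    fix r :: real assume r: "r \<in> {1..b}"
    show "0 \<le> Dz (complex_of_real r * u) / r" using Dz_pos[OF ru_in_A[OF u r]] r by simp
  qed
  finally show ?thesis .
qed

lemma Iv_enn2real: "cmod u = 1 \<Longrightarrow> Iv u = enn2real (KI u)"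
proof -
  assume u: "cmod u = 1"
  have u0: "u \<noteq> 0" using u by auto
  have "E (Arg u) = u" using E_Arg[OF u0] u by simp
  then have "Iv u > 0" using I_pos[of "Arg u"] by simp
  then show ?thesis using KI_Iv[OF u] by simp
qed

lemma IvE_meas[measurable]: "(\<lambda>\<theta>. Iv (E \<theta>)) \<in> borel_measurable borel"
proof -
  have [measurable]: "E \<in> borel_measurable borel"
    unfolding E_def[abs_def] by (intro borel_measurable_continuous_onI continuous_intros)
  have "(\<lambda>\<theta>. Iv (E \<theta>)) = (\<lambda>\<theta>. enn2real (KI (E \<theta>)))" by (simp add: Iv_enn2real)
  also have "\<dots> \<in> borel_measurable borel" by measurable
  finally show ?thesis .
qed

lemma rho0_meas: "rho0 f g b \<in> borel_measurable borel"
proof -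
  have fAU: "f ` A \<subseteq> f ` U" using A_U by blast
  have [measurable]: "(\<lambda>w. indicator (f ` A) w *\<^sub>R g w) \<in> borel_measurable borel"
    by (rule borel_measurable_continuous_on_indicator[OF fA_borel continuous_on_subset[OF cont_g fAU]])
  have [measurable]: "(\<lambda>z. indicator A z *\<^sub>R rad_deriv f z) \<in> borel_measurable borel"
    by (rule borel_measurable_continuous_on_indicator[OF A_borel cont_rad])
  have [measurable]: "f ` A \<in> sets borel" by (rule fA_borel)
  define R0 where "R0 z = (Dz0 z / cmod z) / (cmod (indicator A z *\<^sub>R rad_deriv f z) * enn2real (KI (z / complex_of_real (cmod z))))" for z
  have R0m[measurable]: "R0 \<in> borel_measurable borel" unfolding R0_def[abs_def] by measurable
  have "rho0 f g b = (\<lambda>w. indicator (f ` A) w * ennreal (R0 (indicator (f ` A) w *\<^sub>R g w)))"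
  proof
    fix w show "rho0 f g b w = indicator (f ` A) w * ennreal (R0 (indicator (f ` A) w *\<^sub>R g w))"
    proof (cases "w \<in> f ` A")
      case True
      then obtain z where z: "z \<in> A" "w = f z" by blast
      have gz: "g w = z" using g_f[OF A_U[OF z(1)]] z by simp
      have u: "cmod (z / complex_of_real (cmod z)) = 1" using A_ne0[OF z(1)] by (simp add: norm_divide)
      have "R0 z = (dir_dil f (Arg z) z / cmod z) / (cmod (rad_deriv f z) * radial_dil_integral f b (Arg z))"
        using z(1) by (simp add: R0_def Dz0_def dir_dil_Arg rdi_Arg Iv_enn2real[OF u])
      then show ?thesis using True unfolding rho0_def Let_def by (simp add: gz A_def)
    next
      case False
      then show ?thesis by (simp add: rho0_def A_def)
    qed
  qed
  also have "\<dots> \<in> borel_measurable borel" by measurable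
  finally show ?thesis .
qed


lemma V_nn:
  "(\<integral>\<^sup>+\<theta>. indicator {0..<2*pi} \<theta> * ennreal (inverse (Iv (E \<theta>))) \<partial>lborel)
   = ennreal (integral {0..2*pi} (\<lambda>\<theta>. inverse (radial_dil_integral f b \<theta>)))"
proof -
  obtain Imin where Im: "Imin > 0" "\<And>\<theta>. Imin \<le> Iv (E \<theta>)" using I_lower by blast
  define F where "F \<theta> = indicator {0..2*pi} \<theta> * inverse (Iv (E \<theta>))" for \<theta>
  have Fm: "F \<in> borel_measurable borel" unfolding F_def[abs_def] by measurable
  have F0: "F \<theta> \<ge> 0" for \<theta> using I_pos[of \<theta>] by (simp add: F_def)
  have eq1: "(\<integral>\<^sup>+\<theta>. indicator {0..<2*pi} \<theta> * ennreal (inverse (Iv (E \<theta>))) \<partial>lborel) = (\<integral>\<^sup>+\<theta>. ennreal (F \<theta>) \<partial>lborel)"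
  proof (rule nn_integral_cong_AE)
    show "AE \<theta> in lborel. indicator {0..<2*pi} \<theta> * ennreal (inverse (Iv (E \<theta>))) = ennreal (F \<theta>)"
      using AE_lborel_singleton[of "2*pi"] by eventually_elim (auto simp: F_def split: split_indicator)
  qed
  have "(\<integral>\<^sup>+\<theta>. ennreal (F \<theta>) \<partial>lborel) \<le> (\<integral>\<^sup>+\<theta>. ennreal (inverse Imin) * indicator {0..2*pi} \<theta> \<partial>lborel)"
  proof (intro nn_integral_mono)
    fix \<theta> :: real
    have "inverse (Iv (E \<theta>)) \<le> inverse Imin" using Im I_pos[of \<theta>] by (simp add: le_imp_inverse_le)
    then show "ennreal (F \<theta>) \<le> ennreal (inverse Imin) * indicator {0..2*pi} \<theta>"
      by (auto simp: F_def split: split_indicator intro: ennreal_leI)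
  qed
  also have "\<dots> = ennreal (inverse Imin) * ennreal (2*pi)" by (simp add: nn_integral_cmult_indicator)
  also have "\<dots> < \<infinity>" by (simp add: ennreal_mult_less_top)
  finally have fin: "(\<integral>\<^sup>+\<theta>. ennreal (F \<theta>) \<partial>lborel) < \<infinity>" .
  define v where "v = enn2real (\<integral>\<^sup>+\<theta>. ennreal (F \<theta>) \<partial>lborel)"
  have v: "(\<integral>\<^sup>+\<theta>. ennreal (F \<theta>) \<partial>lborel) = ennreal v" "v \<ge> 0"
    using fin by (auto simp: v_def less_top)
  have "(F has_integral v) UNIV" by (rule nn_integral_has_integral[OF Fm F0 v])
  then have "((\<lambda>\<theta>. inverse (Iv (E \<theta>))) has_integral v) {0..2*pi}"
  proof -
    assume a: "(F has_integral v) UNIV"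
    have Feq: "F = (\<lambda>\<theta>. if \<theta> \<in> {0..2*pi} then inverse (Iv (E \<theta>)) else 0)" by (auto simp: F_def fun_eq_iff)
    show ?thesis using a unfolding Feq has_integral_restrict_UNIV .
  qed
  then have "integral {0..2*pi} (\<lambda>\<theta>. inverse (radial_dil_integral f b \<theta>)) = v"
    by (simp add: rdi_Iv integral_unique)
  then show ?thesis using eq1 v by simp
qed

theorem main_result:
  "modulus2 (radial_image_family f b) =
           ennreal (integral {0..2*pi} (\<lambda>\<theta>. inverse (radial_dil_integral f b \<theta>)))
         \<and> admissible2 (radial_image_family f b) (rho0 f g b)
         \<and> modulus2 (radial_image_family f b) = (\<integral>\<^sup>+ w. (rho0 f g b w)\<^sup>2 \<partial>lborel)"
proof -
  define V where "V = integral {0..2*pi} (\<lambda>\<theta>. inverse (radial_dil_integral f b \<theta>))"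
  have [measurable]: "rho0 f g b \<in> borel_measurable borel" by (rule rho0_meas)
  have adm0: "admissible2 (radial_image_family f b) (rho0 f g b)"
    unfolding admissible2_def radial_image_family_def
    using rho0_meas by (auto simp: ds_P rho0_curve)
  have E0: "(\<integral>\<^sup>+ w. (rho0 f g b w)\<^sup>2 \<partial>lborel) = ennreal V"
  proof -
    have "(\<integral>\<^sup>+ w. (rho0 f g b w)\<^sup>2 \<partial>lborel) = (\<integral>\<^sup>+ w. indicator (f`A) w * (rho0 f g b w)\<^sup>2 \<partial>lborel)"
      by (intro nn_integral_cong) (auto simp: rho0_def A_def split: split_indicator)
    also have "\<dots> = (\<integral>\<^sup>+\<theta>. indicator {0..<2*pi} \<theta> *
            (\<integral>\<^sup>+r. indicator {1..b} r * ennreal (r * jac f (P r \<theta>)) * (rho0 f g b (f (P r \<theta>)))\<^sup>2 \<partial>lborel) \<partial>lborel)"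
      by (rule cov_main) measurable
    also have "\<dots> = (\<integral>\<^sup>+\<theta>. indicator {0..<2*pi} \<theta> * ennreal (inverse (Iv (E \<theta>))) \<partial>lborel)"
      by (simp add: rho0_sq)
    also have "\<dots> = ennreal V" by (simp add: V_nn V_def)
    finally show ?thesis .
  qed
  have low: "ennreal V \<le> (\<integral>\<^sup>+ w. (\<rho> w)\<^sup>2 \<partial>lborel)" if adm: "admissible2 (radial_image_family f b) \<rho>" for \<rho>
  proof -
    have \<rho>m[measurable]: "\<rho> \<in> borel_measurable borel" using adm by (simp add: admissible2_def)
    have ad: "1 \<le> (\<integral>\<^sup>+t. indicator {1..b} t * \<rho> (f (P t \<theta>)) * ennreal (cmod (rad_deriv f (P t \<theta>))) \<partial>lborel)"
      if \<theta>: "\<theta> \<in> {0..<2*pi}" for \<theta>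
    proof -
      have "((\<lambda>r. f (complex_of_real r * exp (\<i> * complex_of_real \<theta>))), 1, b) \<in> radial_image_family f b"
        using \<theta> unfolding radial_image_family_def by auto
      then have "1 \<le> ds_integral \<rho> (\<lambda>r. f (complex_of_real r * exp (\<i> * complex_of_real \<theta>))) 1 b"
        using adm unfolding admissible2_def by blast
      then show ?thesis by (simp add: ds_P)
    qed
    have "ennreal V = (\<integral>\<^sup>+\<theta>. indicator {0..<2*pi} \<theta> * ennreal (inverse (Iv (E \<theta>))) \<partial>lborel)"
      by (simp add: V_nn V_def)
    also have "\<dots> \<le> (\<integral>\<^sup>+\<theta>. indicator {0..<2*pi} \<theta> *
            (\<integral>\<^sup>+r. indicator {1..b} r * ennreal (r * jac f (P r \<theta>)) * (\<rho> (f (P r \<theta>)))\<^sup>2 \<partial>lborel) \<partial>lborel)"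
    proof (intro nn_integral_mono)
      fix \<theta> :: real
      show "indicator {0..<2*pi} \<theta> * ennreal (inverse (Iv (E \<theta>))) \<le> indicator {0..<2*pi} \<theta> *
            (\<integral>\<^sup>+r. indicator {1..b} r * ennreal (r * jac f (P r \<theta>)) * (\<rho> (f (P r \<theta>)))\<^sup>2 \<partial>lborel)"
        using lower_theta[OF \<rho>m ad] by (cases "\<theta> \<in> {0..<2*pi}") auto
    qed
    also have "\<dots> = (\<integral>\<^sup>+ w. indicator (f`A) w * (\<rho> w)\<^sup>2 \<partial>lborel)"
      by (rule cov_main[symmetric]) measurable
    also have "\<dots> \<le> (\<integral>\<^sup>+ w. (\<rho> w)\<^sup>2 \<partial>lborel)"
      by (intro nn_integral_mono) (auto split: split_indicator)
    finally show ?thesis .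
  qed
  have M: "modulus2 (radial_image_family f b) = ennreal V"
  proof (rule antisym)
    show "modulus2 (radial_image_family f b) \<le> ennreal V"
    proof -
      have "modulus2 (radial_image_family f b) \<le> (\<integral>\<^sup>+ w. (rho0 f g b w)\<^sup>2 \<partial>lborel)"
        unfolding modulus2_def by (rule INF_lower) (simp add: adm0)
      then show ?thesis using E0 by simp
    qed
    show "ennreal V \<le> modulus2 (radial_image_family f b)"
      unfolding modulus2_def using low by (auto intro!: INF_greatest)
  qed
  show ?thesis using M adm0 E0 by (simp add: V_def)
qed

end

theorem proposition2p9:
  fixes f g :: "complex \<Rightarrow> complex" and U :: "complex set" and b :: real
  assumes b: "b > 1"
    and U: "open U" "annulus b \<subseteq> U"
    and homeo: "homeomorphism U (f ` U) f g"
    and C1: "\<forall>z\<in>U. f differentiable (at z)"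
           "continuous_on U (dx f)" "continuous_on U (dy f)"
    and Jpos: "\<forall>z\<in>annulus b. jac f z > 0"
  shows "modulus2 (radial_image_family f b) =
           ennreal (integral {0..2*pi} (\<lambda>\<theta>. inverse (radial_dil_integral f b \<theta>)))
         \<and> admissible2 (radial_image_family f b) (rho0 f g b)
         \<and> modulus2 (radial_image_family f b) = (\<integral>\<^sup>+ w. (rho0 f g b w)\<^sup>2 \<partial>lborel)"
  proof -
  interpret S29 f g U b
    using b U homeo C1 Jpos by unfold_locales auto
  show ?thesis by (rule main_result)
qed

end
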